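(* Let $n\in\mathbb{Z}$ and let $d:\mathcal{A}\to A$ be an $n$-covariant derivation. Then there exists a function $\beta:\mathbb{Z}\to\mathbb{C}$ with convergent increments, unique if $n\ne0$ and unique modulo an additive constant if $n=0$, such that $d(a)=[U^n\beta(\mathbb{K}),a]$ for all $a\in\mathcal{A}$.
   Context: Let $\{E_k\}$ be the canonical basis of $\ell^2(\mathbb{Z})$, $UE_k=E_{k+1}$, $\mathbb{K}E_k=kE_k$, $a(\mathbb{K})E_k=a(k)E_k$. $A$ is the C$^*$-algebra generated by $U$ and all $a(\mathbb{K})$ with $a$ having finite limits at $\pm\infty$; $\mathcal{A}$ is the algebra of finite sums $\sum_nU^na_n(\mathbb{K})$ with each $a_n$ eventually constant (constant on $k\ge k_0$ and on $k\le-k_0$ for some $k_0$). For $\varphi\in[0,2\pi)$ the rotation automorphism is $\rho_\varphi(a)=e^{i\varphi\mathbb{K}}ae^{-i\varphi\mathbb{K}}$ (it preserves $A$ and $\mathcal{A}$ and fixes diagonal operators). A derivation $d:\mathcal{A}\to A$ (linear, Leibniz) is $n$-covariant if $d(\rho_\varphi(a))=e^{-in\varphi}\rho_\varphi(d(a))$ for all $a\in\mathcal{A}$, $\varphi$. A function $\beta$ has convergent increments if $k\mapsto\beta(k)-\beta(k-1)$ has finite limits as $k\to\pm\infty$. *)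

theory Defs
  imports "HOL-Analysis.Analysis"
begin

text \<open>Operators on l2(Z) are represented by their matrices with respect to the
canonical basis E_k:  M i j = <E_i, M E_j>.\<close>

type_synonym mat = "int \<Rightarrow> int \<Rightarrow> complex"

definition l2 :: "(int \<Rightarrow> complex) set" where
  "l2 = {x. (\<lambda>k. (cmod (x k))^2) summable_on UNIV}"

definition l2norm :: "(int \<Rightarrow> complex) \<Rightarrow> real" where
  "l2norm x = sqrt (infsum (\<lambda>k. (cmod (x k))^2) UNIV)"

definition mapply :: "mat \<Rightarrow> (int \<Rightarrow> complex) \<Rightarrow> (int \<Rightarrow> complex)" where
  "mapply M x = (\<lambda>i. infsum (\<lambda>j. M i j * x j) UNIV)"

definition bounded_op :: "mat \<Rightarrow> bool" where
  "bounded_op M \<longleftrightarrow> (\<exists>C. \<forall>x\<in>l2. (\<forall>i. (\<lambda>j. M i j * x j) summable_on UNIV)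
      \<and> mapply M x \<in> l2 \<and> l2norm (mapply M x) \<le> C * l2norm x)"

definition opnorm :: "mat \<Rightarrow> real" where
  "opnorm M = Sup {l2norm (mapply M x) | x. x \<in> l2 \<and> l2norm x \<le> 1}"

definition mmult :: "mat \<Rightarrow> mat \<Rightarrow> mat" where
  "mmult M N = (\<lambda>i k. infsum (\<lambda>j. M i j * N j k) UNIV)"

definition madd :: "mat \<Rightarrow> mat \<Rightarrow> mat" where
  "madd M N = (\<lambda>i j. M i j + N i j)"

definition mdiff :: "mat \<Rightarrow> mat \<Rightarrow> mat" where
  "mdiff M N = (\<lambda>i j. M i j - N i j)"

definition mscale :: "complex \<Rightarrow> mat \<Rightarrow> mat" where
  "mscale c M = (\<lambda>i j. c * M i j)"

definition madj :: "mat \<Rightarrow> mat" where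
  "madj M = (\<lambda>i j. cnj (M j i))"

definition commutator :: "mat \<Rightarrow> mat \<Rightarrow> mat" where
  "commutator M N = mdiff (mmult M N) (mmult N M)"

definition Upow :: "int \<Rightarrow> mat" where
  "Upow n = (\<lambda>i j. if i = j + n then 1 else 0)"

text \<open>a(K): the diagonal operator a(K) E_k = a(k) E_k.\<close>
definition diagop :: "(int \<Rightarrow> complex) \<Rightarrow> mat" where
  "diagop a = (\<lambda>i j. if i = j then a i else 0)"

definition has_limits_pm :: "(int \<Rightarrow> complex) \<Rightarrow> bool" where
  "has_limits_pm a \<longleftrightarrow> (\<exists>L. (a \<longlongrightarrow> L) at_top) \<and> (\<exists>L. (a \<longlongrightarrow> L) at_bot)"

definition eventually_const :: "(int \<Rightarrow> complex) \<Rightarrow> bool" where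
  "eventually_const a \<longleftrightarrow> (\<exists>k0 c1 c2. (\<forall>k\<ge>k0. a k = c1) \<and> (\<forall>k\<le>-k0. a k = c2))"

definition convergent_increments :: "(int \<Rightarrow> complex) \<Rightarrow> bool" where
  "convergent_increments \<beta> \<longleftrightarrow> has_limits_pm (\<lambda>k. \<beta> k - \<beta> (k - 1))"

definition Cstar_A :: "mat set" where
  "Cstar_A = \<Inter>{S. S \<subseteq> {M. bounded_op M}
     \<and> Upow 1 \<in> S
     \<and> (\<forall>a. has_limits_pm a \<longrightarrow> diagop a \<in> S)
     \<and> (\<forall>M\<in>S. \<forall>N\<in>S. madd M N \<in> S \<and> mmult M N \<in> S)
     \<and> (\<forall>c. \<forall>M\<in>S. mscale c M \<in> S)
     \<and> (\<forall>M\<in>S. madj M \<in> S)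
     \<and> (\<forall>f M. (\<forall>m::nat. f m \<in> S) \<and> bounded_op M
            \<and> (\<lambda>m. opnorm (mdiff (f m) M)) \<longlonglongrightarrow> 0 \<longrightarrow> M \<in> S)}"

definition smooth_A :: "mat set" where
  "smooth_A = {M. \<exists>N a. finite N \<and> (\<forall>n. eventually_const (a n))
      \<and> M = (\<lambda>i j. \<Sum>n\<in>N. mmult (Upow n) (diagop (a n)) i j)}"

definition rho :: "real \<Rightarrow> mat \<Rightarrow> mat" where
  "rho \<phi> M = mmult (mmult (diagop (\<lambda>k. exp (\<i> * of_real \<phi> * of_int k))) M)
                    (diagop (\<lambda>k. exp (- \<i> * of_real \<phi> * of_int k)))"

definition is_derivation :: "(mat \<Rightarrow> mat) \<Rightarrow> bool" where
  "is_derivation d \<longleftrightarrow> (\<forall>a\<in>smooth_A. d a \<in> Cstar_A)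
     \<and> (\<forall>a\<in>smooth_A. \<forall>b\<in>smooth_A. d (madd a b) = madd (d a) (d b))
     \<and> (\<forall>c. \<forall>a\<in>smooth_A. d (mscale c a) = mscale c (d a))
     \<and> (\<forall>a\<in>smooth_A. \<forall>b\<in>smooth_A. d (mmult a b) = madd (mmult a (d b)) (mmult (d a) b))"

definition n_covariant :: "int \<Rightarrow> (mat \<Rightarrow> mat) \<Rightarrow> bool" where
  "n_covariant n d \<longleftrightarrow> (\<forall>a\<in>smooth_A. \<forall>\<phi>\<in>{0..<2*pi}.
     d (rho \<phi> a) = mscale (exp (- \<i> * of_int n * of_real \<phi>)) (rho \<phi> (d a)))"

end

theory Submission
  imports Defs
begin


definition E :: "int \<Rightarrow> int \<Rightarrow> complex" where "E j = (\<lambda>i. if i = j then 1 else 0)"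

lemma infsum_single0:
  fixes f :: "'a \<Rightarrow> 'b::{comm_monoid_add, t2_space}"
  assumes "\<And>j. j \<noteq> a \<Longrightarrow> f j = 0"
  shows "infsum f UNIV = f a"
proof -
  have "infsum f UNIV = infsum f {a}"
    by (rule infsum_cong_neutral) (use assms in auto)
  then show ?thesis by simp
qed

lemma has_sum_single0:
  fixes f :: "'a \<Rightarrow> 'b::{comm_monoid_add, t2_space}"
  assumes "\<And>j. j \<noteq> a \<Longrightarrow> f j = 0"
  shows "(f has_sum f a) UNIV"
  by (rule has_sum_finite_neutralI[where B="{a}"]) (use assms in auto)

lemma infsum_sum_swap:
  fixes f :: "'i \<Rightarrow> 'a \<Rightarrow> complex"
  assumes "finite F" "\<And>i. i \<in> F \<Longrightarrow> f i summable_on UNIV"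
  shows "infsum (\<lambda>j. \<Sum>i\<in>F. f i j) UNIV = (\<Sum>i\<in>F. infsum (f i) UNIV)
     \<and> (\<lambda>j. \<Sum>i\<in>F. f i j) summable_on UNIV"
  using assms
proof (induction F rule: finite_induct)
  case empty
  then show ?case by simp
next
  case (insert a F)
  then have IH: "infsum (\<lambda>j. \<Sum>i\<in>F. f i j) UNIV = (\<Sum>i\<in>F. infsum (f i) UNIV)"
     "(\<lambda>j. \<Sum>i\<in>F. f i j) summable_on UNIV" by auto
  have fa: "f a summable_on UNIV" using insert by auto
  show ?case using insert(1,2) IH fa
    by (simp add: infsum_add summable_on_add)
qed

lemma sq_le_sqrt_bound:
  fixes s A :: real
  assumes "0 \<le> s" "0 \<le> A" "s \<le> A * sqrt s"
  shows "s \<le> A^2"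
proof (cases "s = 0")
  case True then show ?thesis by simp
next
  case False
  then have sp: "sqrt s > 0" using assms by simp
  have "sqrt s * sqrt s \<le> A * sqrt s" using assms by simp
  then have "sqrt s \<le> A" using sp by (meson mult_right_le_imp_le)
  then have "(sqrt s)^2 \<le> A^2" using sp by (intro power_mono) auto
  then show ?thesis using assms by simp
qed

lemma l2norm_nonneg: "0 \<le> l2norm x"
  by (simp add: l2norm_def infsum_nonneg)

lemma l2_summable: "x \<in> l2 \<Longrightarrow> (\<lambda>k. (cmod (x k))^2) summable_on UNIV"
  by (simp add: l2_def)

lemma l2normsq: "(l2norm x)^2 = infsum (\<lambda>k. (cmod (x k))^2) UNIV"
  unfolding l2norm_def by (simp add: infsum_nonneg)

lemma l2_hassum: "x \<in> l2 \<Longrightarrow> ((\<lambda>k. (cmod (x k))^2) has_sum (l2norm x)^2) UNIV"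
  by (simp add: l2normsq l2_def)

lemma l2_comp_le:
  assumes "x \<in> l2" shows "cmod (x k) \<le> l2norm x"
proof -
  have "(\<Sum>j\<in>{k}. (cmod (x j))^2) \<le> infsum (\<lambda>j. (cmod (x j))^2) UNIV"
    by (rule finite_sum_le_infsum) (use assms in \<open>auto simp: l2_def\<close>)
  then have "(cmod (x k))^2 \<le> (l2norm x)^2" by (simp add: l2normsq)
  then show ?thesis using l2norm_nonneg[of x] by (rule power2_le_imp_le)
qed

lemma sumbound_l2:
  assumes "\<And>F. finite F \<Longrightarrow> (\<Sum>k\<in>F. (cmod (x k))^2) \<le> C^2" "0 \<le> C"
  shows "x \<in> l2 \<and> l2norm x \<le> C"
proof -
  have s: "(\<lambda>k. (cmod (x k))^2) summable_on UNIV"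
    by (rule nonneg_bdd_above_summable_on) (auto intro!: bdd_aboveI2[where M="C^2"] assms)
  have "infsum (\<lambda>k. (cmod (x k))^2) UNIV \<le> C^2"
    by (rule infsum_le_finite_sums[OF s]) (use assms in auto)
  then have "sqrt (infsum (\<lambda>k. (cmod (x k))^2) UNIV) \<le> sqrt (C^2)" by (rule real_sqrt_le_mono)
  then show ?thesis using s assms(2) unfolding l2_def l2norm_def by simp
qed

lemma l2_finite:
  assumes "finite F"
  shows "(\<lambda>k. if k \<in> F then v k else 0) \<in> l2 \<and> (l2norm (\<lambda>k. if k \<in> F then v k else 0))^2 = (\<Sum>k\<in>F. (cmod (v k))^2)"
proof -
  have h: "((\<lambda>k. (cmod (if k \<in> F then v k else 0))^2) has_sum (\<Sum>k\<in>F. (cmod (v k))^2)) UNIV"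
    by (rule has_sum_finite_neutralI[where B=F]) (use assms in auto)
  then show ?thesis unfolding l2_def l2normsq
    by (auto simp: summable_on_def infsumI)
qed

lemma E_l2: "E j \<in> l2 \<and> l2norm (E j) = 1"
proof -
  have "E j = (\<lambda>k. if k \<in> {j} then 1 else 0)" by (auto simp: E_def)
  then have "E j \<in> l2 \<and> (l2norm (E j))^2 = 1" using l2_finite[of "{j}" "\<lambda>_. 1"] by simp
  then show ?thesis using l2norm_nonneg[of "E j"] power2_eq_iff_nonneg[of "l2norm (E j)" 1] by simp
qed

lemma l2_zero_comp: "x \<in> l2 \<Longrightarrow> l2norm x = 0 \<Longrightarrow> x k = 0"
  using l2_comp_le[of x k] by simp

lemma amgm_aux:
  fixes a b t :: real assumes "t > 0"
  shows "a * b \<le> (t * a^2 + b^2 / t) / 2"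
proof -
  have "(t * a^2 + b^2 / t) / 2 - a*b = (t*a - b)^2 / (2*t)" using assms
    by (simp add: field_simps power2_eq_square)
  moreover have "(t*a - b)^2 / (2*t) \<ge> 0" using assms by simp
  ultimately show ?thesis by linarith
qed

lemma l2_prod:
  assumes x: "x \<in> l2" and y: "y \<in> l2"
  shows "(\<lambda>k. cmod (x k * y k)) summable_on UNIV \<and> infsum (\<lambda>k. cmod (x k * y k)) UNIV \<le> l2norm x * l2norm y"
proof -
  have hx: "((\<lambda>k. (cmod (x k))^2) has_sum (l2norm x)^2) UNIV" by (rule l2_hassum[OF x])
  have hy: "((\<lambda>k. (cmod (y k))^2) has_sum (l2norm y)^2) UNIV" by (rule l2_hassum[OF y])
  have gen: "((\<lambda>k. (t * (cmod (x k))^2 + (cmod (y k))^2 / t) / 2) has_sum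
     ((t * (l2norm x)^2 + (l2norm y)^2 / t) / 2)) UNIV" for t
    using has_sum_cmult_left[OF has_sum_add[OF has_sum_cmult_right[OF hx, of t] has_sum_cmult_left[OF hy, of "1/t"]], of "1/2"]
    by simp
  have pw: "cmod (x k * y k) \<le> (t * (cmod (x k))^2 + (cmod (y k))^2 / t) / 2" if "t > 0" for t k
    using amgm_aux[OF that, of "cmod (x k)" "cmod (y k)"] by (simp add: norm_mult)
  have abs: "(\<lambda>k. cmod (x k * y k)) summable_on UNIV"
    by (rule summable_on_comparison_test[OF has_sum_imp_summable[OF gen[of 1]]]) (use pw[of 1] in auto)
  show ?thesis
  proof (cases "l2norm x = 0 \<or> l2norm y = 0")
    case True
    then have "\<forall>k. x k * y k = 0" using l2_zero_comp x y by auto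
    then have "(\<lambda>k. cmod (x k * y k)) = (\<lambda>_. 0)" by auto
    then have "infsum (\<lambda>k. cmod (x k * y k)) UNIV = 0" by simp
    then show ?thesis using abs l2norm_nonneg[of x] l2norm_nonneg[of y] by simp
  next
    case False
    then have px: "l2norm x > 0" and py: "l2norm y > 0" using l2norm_nonneg
      by (auto simp: order_le_less)
    define t where "t = l2norm y / l2norm x"
    have tp: "t > 0" using px py by (simp add: t_def)
    have "infsum (\<lambda>k. cmod (x k * y k)) UNIV \<le> (t * (l2norm x)^2 + (l2norm y)^2 / t) / 2"
      by (rule has_sum_mono[OF has_sum_infsum[OF abs] gen]) (use pw[OF tp] in auto)
    also have "\<dots> = l2norm x * l2norm y"
    proof -
      have a1: "t * (l2norm x)^2 = l2norm x * l2norm y" using px by (simp add: t_def power2_eq_square)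
      have a2: "(l2norm y)^2 / t = l2norm x * l2norm y" using px py by (simp add: t_def power2_eq_square)
      show ?thesis unfolding a1 a2 by simp
    qed
    finally have "infsum (\<lambda>k. cmod (x k * y k)) UNIV \<le> l2norm x * l2norm y" .
    then show ?thesis by (rule conjI[OF abs])
  qed
qed



lemma l2_scale:
  assumes "x \<in> l2"
  shows "(\<lambda>k. a * x k) \<in> l2 \<and> l2norm (\<lambda>k. a * x k) = cmod a * l2norm x"
proof -
  have h: "((\<lambda>k. (cmod (a * x k))^2) has_sum ((cmod a)^2 * (l2norm x)^2)) UNIV"
    using has_sum_cmult_right[OF l2_hassum[OF assms], of "(cmod a)^2"]
    by (simp add: norm_mult power_mult_distrib)
  then have s: "(\<lambda>k. a * x k) \<in> l2" unfolding l2_def by (auto simp: summable_on_def)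
  have "(l2norm (\<lambda>k. a * x k))^2 = (cmod a * l2norm x)^2"
    using h by (simp add: l2normsq infsumI power_mult_distrib)
  then have "l2norm (\<lambda>k. a * x k) = cmod a * l2norm x"
    using power2_eq_iff_nonneg[of "l2norm (\<lambda>k. a * x k)" "cmod a * l2norm x"] l2norm_nonneg[of x]
      l2norm_nonneg[of "\<lambda>k. a * x k"] by simp
  then show ?thesis using s by simp
qed

lemma l2_cnj: "x \<in> l2 \<Longrightarrow> (\<lambda>k. cnj (x k)) \<in> l2 \<and> l2norm (\<lambda>k. cnj (x k)) = l2norm x"
  by (simp add: l2_def l2norm_def)

lemma l2_add:
  assumes x: "x \<in> l2" and y: "y \<in> l2"
  shows "(\<lambda>k. x k + y k) \<in> l2 \<and> l2norm (\<lambda>k. x k + y k) \<le> l2norm x + l2norm y"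
proof -
  have P: "(\<lambda>k. cmod (x k * y k)) summable_on UNIV" "infsum (\<lambda>k. cmod (x k * y k)) UNIV \<le> l2norm x * l2norm y"
    using l2_prod[OF x y] by auto
  have h: "((\<lambda>k. (cmod (x k))^2 + (cmod (y k))^2 + 2 * cmod (x k * y k)) has_sum
      ((l2norm x)^2 + (l2norm y)^2 + 2 * infsum (\<lambda>k. cmod (x k * y k)) UNIV)) UNIV"
    by (intro has_sum_add l2_hassum x y has_sum_cmult_right has_sum_infsum P)
  have pw: "(cmod (x k + y k))^2 \<le> (cmod (x k))^2 + (cmod (y k))^2 + 2 * cmod (x k * y k)" for k
  proof -
    have "cmod (x k + y k) \<le> cmod (x k) + cmod (y k)" by (rule norm_triangle_ineq)
    then have "(cmod (x k + y k))^2 \<le> (cmod (x k) + cmod (y k))^2" by (intro power_mono) auto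
    then show ?thesis by (simp add: power2_sum norm_mult)
  qed
  have s: "(\<lambda>k. (cmod (x k + y k))^2) summable_on UNIV"
    by (rule summable_on_comparison_test[OF has_sum_imp_summable[OF h]]) (use pw in auto)
  have "infsum (\<lambda>k. (cmod (x k + y k))^2) UNIV \<le> (l2norm x)^2 + (l2norm y)^2 + 2 * infsum (\<lambda>k. cmod (x k * y k)) UNIV"
    by (rule has_sum_mono[OF has_sum_infsum[OF s] h]) (use pw in auto)
  also have "\<dots> \<le> (l2norm x + l2norm y)^2" using P(2) by (simp add: power2_sum)
  finally have "(l2norm (\<lambda>k. x k + y k))^2 \<le> (l2norm x + l2norm y)^2" by (simp add: l2normsq)
  then have "l2norm (\<lambda>k. x k + y k) \<le> l2norm x + l2norm y"
    by (rule power2_le_imp_le) (simp add: l2norm_nonneg add_nonneg_nonneg)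
  then show ?thesis using s by (simp add: l2_def)
qed

lemma l2_diff:
  assumes x: "x \<in> l2" and y: "y \<in> l2"
  shows "(\<lambda>k. x k - y k) \<in> l2 \<and> l2norm (\<lambda>k. x k - y k) \<le> l2norm x + l2norm y"
proof -
  have y': "(\<lambda>k. (-1) * y k) \<in> l2" "l2norm (\<lambda>k. (-1) * y k) = l2norm y" using l2_scale[OF y, of "-1"] by auto
  show ?thesis using l2_add[OF x y'(1)] y'(2) by simp
qed

definition nrm_le :: "mat \<Rightarrow> real \<Rightarrow> bool" where
  "nrm_le M c \<longleftrightarrow> (\<forall>x\<in>l2. (\<forall>i. (\<lambda>j. M i j * x j) summable_on UNIV)
      \<and> mapply M x \<in> l2 \<and> l2norm (mapply M x) \<le> c * l2norm x)"

lemma bounded_op_nrm: "bounded_op M \<longleftrightarrow> (\<exists>c. nrm_le M c)"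
  unfolding bounded_op_def nrm_le_def by simp

lemma nrmD:
  assumes "nrm_le M c" "x \<in> l2"
  shows "(\<lambda>j. M i j * x j) summable_on UNIV" "mapply M x \<in> l2" "l2norm (mapply M x) \<le> c * l2norm x"
  using assms unfolding nrm_le_def by auto

lemma mapply_E: "mapply M (E j) = (\<lambda>i. M i j)"
  unfolding mapply_def
  by (rule ext, subst infsum_single0[where a=j]) (auto simp: E_def)

lemma nrm_nonneg: assumes "nrm_le M c" shows "0 \<le> c"
proof -
  have "l2norm (mapply M (E 0)) \<le> c * l2norm (E 0)" using nrmD[OF assms] E_l2 by blast
  then show ?thesis using E_l2 l2norm_nonneg[of "mapply M (E 0)"] by simp
qed

lemma nrm_col: assumes "nrm_le M c" shows "(\<lambda>i. M i j) \<in> l2 \<and> l2norm (\<lambda>i. M i j) \<le> c"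
  using nrmD[OF assms, of "E j"] E_l2[of j] by (simp add: mapply_E)

lemma nrm_entry: assumes "nrm_le M c" shows "cmod (M i j) \<le> c"
  using nrm_col[OF assms, of j] l2_comp_le[of "\<lambda>i. M i j" i] by simp

lemma nrm_mono: "nrm_le M c \<Longrightarrow> c \<le> c' \<Longrightarrow> nrm_le M c'"
  unfolding nrm_le_def using l2norm_nonneg
  by (meson mult_right_mono order_trans)

lemma mapply_add:
  assumes "nrm_le M c" "x \<in> l2" "y \<in> l2"
  shows "mapply M (\<lambda>k. x k + y k) = (\<lambda>i. mapply M x i + mapply M y i)"
  unfolding mapply_def
proof (rule ext)
  fix i
  have "infsum (\<lambda>j. M i j * (x j + y j)) UNIV = infsum (\<lambda>j. M i j * x j + M i j * y j) UNIV"
    by (simp add: distrib_left)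
  also have "\<dots> = infsum (\<lambda>j. M i j * x j) UNIV + infsum (\<lambda>j. M i j * y j) UNIV"
    by (rule infsum_add) (use nrmD[OF assms(1)] assms(2,3) in auto)
  finally show "infsum (\<lambda>j. M i j * (x j + y j)) UNIV = infsum (\<lambda>j. M i j * x j) UNIV + infsum (\<lambda>j. M i j * y j) UNIV" .
qed

lemma mapply_scale: "mapply M (\<lambda>k. a * x k) = (\<lambda>i. a * mapply M x i)"
  unfolding mapply_def
proof (rule ext)
  fix i
  have "infsum (\<lambda>j. M i j * (a * x j)) UNIV = infsum (\<lambda>j. a * (M i j * x j)) UNIV"
    by (simp add: algebra_simps)
  also have "\<dots> = a * infsum (\<lambda>j. M i j * x j) UNIV" by (rule infsum_cmult_right')
  finally show "infsum (\<lambda>j. M i j * (a * x j)) UNIV = a * infsum (\<lambda>j. M i j * x j) UNIV" .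
qed

lemma functional_expand:
  fixes psi :: "(int \<Rightarrow> complex) \<Rightarrow> complex"
  assumes add: "\<And>v w. v \<in> l2 \<Longrightarrow> w \<in> l2 \<Longrightarrow> psi (\<lambda>k. v k + w k) = psi v + psi w"
    and scal: "\<And>v a. v \<in> l2 \<Longrightarrow> psi (\<lambda>k. a * v k) = a * psi v"
    and bnd: "\<And>v. v \<in> l2 \<Longrightarrow> cmod (psi v) \<le> C * l2norm v"
    and x: "x \<in> l2"
  shows "((\<lambda>k. psi (E k) * x k) has_sum psi x) UNIV"
proof -
  define tr where "tr F = (\<lambda>k. if k \<in> F then x k else 0)" for F
  define rs where "rs F = (\<lambda>k. if k \<in> F then 0 else x k)" for F
  have trl2: "finite F \<Longrightarrow> tr F \<in> l2" for F using l2_finite[of F x] by (simp add: tr_def)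
  have zero: "psi (\<lambda>k. 0) = 0"
    using scal[of "E 0" 0] E_l2 by simp
  have trsum: "finite F \<Longrightarrow> psi (tr F) = (\<Sum>k\<in>F. psi (E k) * x k)" for F
  proof (induction F rule: finite_induct)
    case empty
    have "tr {} = (\<lambda>k. 0)" by (simp add: tr_def)
    then show ?case using zero by simp
  next
    case (insert a F)
    have eq: "tr (insert a F) = (\<lambda>k. tr F k + x a * E a k)"
      using insert(2) by (auto simp: tr_def E_def)
    have l: "(\<lambda>k. x a * E a k) \<in> l2" using l2_scale[of "E a" "x a"] E_l2 by simp
    have "psi (tr (insert a F)) = psi (tr F) + psi (\<lambda>k. x a * E a k)"
      unfolding eq by (rule add[OF trl2[OF insert(1)] l])
    also have "\<dots> = psi (tr F) + x a * psi (E a)" using scal E_l2 by simp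
    finally show ?case using insert by (simp add: algebra_simps)
  qed
  have rsl2: "rs F \<in> l2" for F
  proof -
    have "(\<lambda>k. (cmod (rs F k))^2) summable_on UNIV"
      by (rule summable_on_comparison_test[OF l2_summable[OF x]]) (auto simp: rs_def)
    then show ?thesis by (simp add: l2_def)
  qed
  have split: "x = (\<lambda>k. tr F k + rs F k)" for F by (auto simp: tr_def rs_def)
  have rsnorm: "finite F \<Longrightarrow> (l2norm (rs F))^2 = (l2norm x)^2 - (\<Sum>k\<in>F. (cmod (x k))^2)" for F
  proof -
    assume fF: "finite F"
    have "(l2norm x)^2 = infsum (\<lambda>k. (cmod (tr F k))^2 + (cmod (rs F k))^2) UNIV"
      unfolding l2normsq by (rule infsum_cong) (auto simp: tr_def rs_def)
    also have "\<dots> = (l2norm (tr F))^2 + (l2norm (rs F))^2"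
      unfolding l2normsq by (rule infsum_add) (use trl2[OF fF] rsl2 in \<open>auto simp: l2_def\<close>)
    also have "(l2norm (tr F))^2 = (\<Sum>k\<in>F. (cmod (x k))^2)" using l2_finite[OF fF, of x] by (simp add: tr_def)
    finally show ?thesis by simp
  qed
  have diff: "finite F \<Longrightarrow> cmod (psi x - (\<Sum>k\<in>F. psi (E k) * x k)) \<le> C * l2norm (rs F)" for F
  proof -
    assume fF: "finite F"
    have "psi (\<lambda>k. tr F k + rs F k) = psi (tr F) + psi (rs F)" by (rule add[OF trl2[OF fF] rsl2])
    moreover have "(\<lambda>k. tr F k + rs F k) = x" by (auto simp: tr_def rs_def)
    ultimately have "psi x = psi (tr F) + psi (rs F)" by simp
    then have "psi x - (\<Sum>k\<in>F. psi (E k) * x k) = psi (rs F)" using trsum[OF fF] by simp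
    then show ?thesis using bnd[OF rsl2] by simp
  qed
  have lim: "(sum (\<lambda>k. (cmod (x k))^2) \<longlongrightarrow> (l2norm x)^2) (finite_subsets_at_top UNIV)"
    using l2_hassum[OF x] unfolding has_sum_def .
  show ?thesis unfolding has_sum_def
  proof (rule tendstoI)
    fix e :: real assume e: "e > 0"
    define K where "K = \<bar>C\<bar> + 1"
    have K: "K > 0" by (simp add: K_def)
    define d where "d = (e / K)^2"
    have d: "d > 0" using e K by (simp add: d_def)
    have ev: "\<forall>\<^sub>F F in finite_subsets_at_top UNIV. dist (sum (\<lambda>k. (cmod (x k))^2) F) ((l2norm x)^2) < d"
      by (rule tendstoD[OF lim d])
    have ev2: "\<forall>\<^sub>F F in finite_subsets_at_top UNIV. finite F"
      by (simp add: eventually_finite_subsets_at_top_weakI)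
    show "\<forall>\<^sub>F F in finite_subsets_at_top UNIV. dist (sum (\<lambda>k. psi (E k) * x k) F) (psi x) < e"
      using ev ev2
    proof eventually_elim
      case (elim F)
      have "(l2norm (rs F))^2 < d" using elim rsnorm[of F] by (simp add: dist_real_def)
      then have "(l2norm (rs F))^2 < (e/K)^2" by (simp add: d_def)
      then have r: "l2norm (rs F) < e / K"
        by (rule power_less_imp_less_base) (use K e in simp)
      have "dist (sum (\<lambda>k. psi (E k) * x k) F) (psi x) = cmod (psi x - (\<Sum>k\<in>F. psi (E k) * x k))"
        by (simp add: dist_norm norm_minus_commute)
      also have "\<dots> \<le> C * l2norm (rs F)" using diff[OF elim(2)] .
      also have "\<dots> \<le> K * l2norm (rs F)" using l2norm_nonneg[of "rs F"]
        by (intro mult_right_mono) (auto simp: K_def)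
      also have "\<dots> < K * (e / K)" using r K by (intro mult_strict_left_mono) auto
      also have "\<dots> = e" using K by simp
      finally show ?case .
    qed
  qed
qed



lemma nrm_madd:
  assumes X: "nrm_le X c" and Y: "nrm_le Y c'"
  shows "nrm_le (madd X Y) (c + c')"
  unfolding nrm_le_def
proof (intro ballI conjI allI)
  fix x assume x: "x \<in> l2"
  show s: "(\<lambda>j. madd X Y i j * x j) summable_on UNIV" for i
    unfolding madd_def distrib_right by (rule summable_on_add) (use nrmD[OF X x] nrmD[OF Y x] in auto)
  have eq: "mapply (madd X Y) x = (\<lambda>i. mapply X x i + mapply Y x i)"
    unfolding mapply_def madd_def distrib_right
    by (rule ext, rule infsum_add) (use nrmD[OF X x] nrmD[OF Y x] in auto)
  have A: "mapply (madd X Y) x \<in> l2 \<and> l2norm (mapply (madd X Y) x) \<le> l2norm (mapply X x) + l2norm (mapply Y x)"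
    unfolding eq by (rule l2_add) (use nrmD[OF X x] nrmD[OF Y x] in auto)
  then show "mapply (madd X Y) x \<in> l2" by simp
  show "l2norm (mapply (madd X Y) x) \<le> (c + c') * l2norm x"
    using A nrmD(3)[OF X x] nrmD(3)[OF Y x] by (simp add: distrib_right)
qed

lemma nrm_mscale:
  assumes X: "nrm_le X c"
  shows "nrm_le (mscale a X) (cmod a * c)"
  unfolding nrm_le_def
proof (intro ballI conjI allI)
  fix x assume x: "x \<in> l2"
  show "(\<lambda>j. mscale a X i j * x j) summable_on UNIV" for i
    unfolding mscale_def mult.assoc by (rule summable_on_cmult_right) (use nrmD[OF X x] in auto)
  have eq: "mapply (mscale a X) x = (\<lambda>i. a * mapply X x i)"
    unfolding mapply_def mscale_def mult.assoc by (rule ext, rule infsum_cmult_right')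
  have A: "mapply (mscale a X) x \<in> l2 \<and> l2norm (mapply (mscale a X) x) = cmod a * l2norm (mapply X x)"
    unfolding eq by (rule l2_scale) (use nrmD[OF X x] in auto)
  then show "mapply (mscale a X) x \<in> l2" by simp
  show "l2norm (mapply (mscale a X) x) \<le> (cmod a * c) * l2norm x"
    using A nrmD(3)[OF X x] by (simp add: mult.assoc mult_left_mono)
qed

lemma mdiff_eq: "mdiff X Y = madd X (mscale (-1) Y)"
  by (auto simp: mdiff_def madd_def mscale_def)

lemma nrm_mdiff:
  assumes X: "nrm_le X c" and Y: "nrm_le Y c'"
  shows "nrm_le (mdiff X Y) (c + c')"
  using nrm_madd[OF X nrm_mscale[OF Y, of "-1"]] unfolding mdiff_eq by simp

lemma nrm_zero: "c \<ge> 0 \<Longrightarrow> nrm_le (\<lambda>i j. 0) c"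
  unfolding nrm_le_def mapply_def using l2_finite[of "{}" "\<lambda>_. 0"]
  by (auto simp: l2norm_nonneg)

lemma nrm_sum:
  assumes "finite F" "\<And>m. m \<in> F \<Longrightarrow> nrm_le (A m) (c m)" "\<And>m. m \<in> F \<Longrightarrow> c m \<ge> 0"
  shows "nrm_le (\<lambda>i j. \<Sum>m\<in>F. A m i j) (\<Sum>m\<in>F. c m)"
  using assms
proof (induction F rule: finite_induct)
  case empty
  then show ?case using nrm_zero by simp
next
  case (insert a F)
  have "nrm_le (madd (A a) (\<lambda>i j. \<Sum>m\<in>F. A m i j)) (c a + (\<Sum>m\<in>F. c m))"
    by (rule nrm_madd) (use insert in auto)
  moreover have "madd (A a) (\<lambda>i j. \<Sum>m\<in>F. A m i j) = (\<lambda>i j. \<Sum>m\<in>insert a F. A m i j)"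
    using insert by (auto simp: madd_def)
  ultimately show ?case using insert by simp
qed

lemma nrm_mmult:
  assumes X: "nrm_le X c" and Y: "nrm_le Y c'"
  shows "nrm_le (mmult X Y) (c * c')"
  unfolding nrm_le_def
proof (intro ballI conjI allI)
  fix x assume x: "x \<in> l2"
  have c0: "c \<ge> 0" using nrm_nonneg[OF X] .
  have key: "((\<lambda>k. mmult X Y i k * x k) has_sum mapply X (mapply Y x) i) UNIV" for i
  proof -
    define psi where "psi v = mapply X (mapply Y v) i" for v
    have "((\<lambda>k. psi (E k) * x k) has_sum psi x) UNIV"
    proof (rule functional_expand[where C="c*c'"])
      fix v w assume v: "v \<in> l2" and w: "w \<in> l2"
      show "psi (\<lambda>k. v k + w k) = psi v + psi w"
        unfolding psi_def mapply_add[OF Y v w]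
        by (subst mapply_add[OF X]) (use nrmD[OF Y v] nrmD[OF Y w] in auto)
    next
      fix v a assume v: "v \<in> l2"
      show "psi (\<lambda>k. a * v k) = a * psi v" unfolding psi_def mapply_scale ..
    next
      fix v assume v: "v \<in> l2"
      have "cmod (psi v) \<le> l2norm (mapply X (mapply Y v))"
        unfolding psi_def by (rule l2_comp_le) (use nrmD[OF X] nrmD[OF Y v] in auto)
      also have "\<dots> \<le> c * l2norm (mapply Y v)" using nrmD[OF X] nrmD[OF Y v] by auto
      also have "\<dots> \<le> c * (c' * l2norm v)" using nrmD[OF Y v] c0 by (intro mult_left_mono) auto
      finally show "cmod (psi v) \<le> c * c' * l2norm v" by (simp add: mult.assoc)
    qed (rule x)
    moreover have "psi (E k) = mmult X Y i k" for k
      unfolding psi_def mapply_E by (simp add: mapply_def mmult_def)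
    ultimately show ?thesis unfolding psi_def by simp
  qed
  show "(\<lambda>k. mmult X Y i k * x k) summable_on UNIV" for i using key[of i] by (auto simp: summable_on_def)
  have eq: "mapply (mmult X Y) x = mapply X (mapply Y x)"
    using key by (auto simp: mapply_def intro!: ext infsumI)
  show "mapply (mmult X Y) x \<in> l2" unfolding eq using nrmD[OF X] nrmD[OF Y x] by auto
  have "l2norm (mapply X (mapply Y x)) \<le> c * l2norm (mapply Y x)" using nrmD[OF X] nrmD[OF Y x] by auto
  also have "\<dots> \<le> c * (c' * l2norm x)" using nrmD[OF Y x] c0 by (intro mult_left_mono) auto
  finally show "l2norm (mapply (mmult X Y) x) \<le> c * c' * l2norm x" unfolding eq by (simp add: mult.assoc)
qed



lemma nrm_madj:
  assumes X: "nrm_le X c"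
  shows "nrm_le (madj X) c"
  unfolding nrm_le_def
proof (intro ballI conjI allI)
  fix x assume x: "x \<in> l2"
  have c0: "c \<ge> 0" using nrm_nonneg[OF X] .
  have colc: "(\<lambda>j. cnj (X j i)) \<in> l2" for i using l2_cnj nrm_col[OF X, of i] by blast
  have sm: "(\<lambda>j. cnj (X j i) * x j) summable_on UNIV" for i
  proof -
    have "(\<lambda>j. cmod (cnj (X j i) * x j)) summable_on UNIV" using l2_prod[OF colc x] by (rule conjunct1)
    then show ?thesis by (rule abs_summable_summable)
  qed
  show "(\<lambda>j. madj X i j * x j) summable_on UNIV" for i using sm by (simp add: madj_def)
  define w where "w = mapply (madj X) x"
  have w: "w i = infsum (\<lambda>j. cnj (X j i) * x j) UNIV" for i by (simp add: w_def mapply_def madj_def)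
  have cw: "cnj (w i) = infsum (\<lambda>j. X j i * cnj (x j)) UNIV" for i
  proof -
    have "cnj (w i) = infsum (\<lambda>j. cnj (cnj (X j i) * x j)) UNIV" by (simp only: w infsum_cnj)
    then show ?thesis by simp
  qed
  have bound: "(\<Sum>i\<in>F. (cmod (w i))^2) \<le> (c * l2norm x)^2" if fF: "finite F" for F
  proof -
    define u where "u = (\<lambda>i. if i \<in> F then w i else 0)"
    have u: "u \<in> l2" "(l2norm u)^2 = (\<Sum>i\<in>F. (cmod (w i))^2)" using l2_finite[OF fF, of w] by (auto simp: u_def)
    have Xu: "mapply X u j = (\<Sum>i\<in>F. X j i * w i)" for j
    proof -
      have "mapply X u j = infsum (\<lambda>i. X j i * u i) F"
        unfolding mapply_def by (rule infsum_cong_neutral) (auto simp: u_def)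
      then show ?thesis using fF by (simp add: u_def)
    qed
    have "complex_of_real (\<Sum>i\<in>F. (cmod (w i))^2) = (\<Sum>i\<in>F. w i * cnj (w i))"
      unfolding of_real_sum by (rule sum.cong) (simp_all only: complex_norm_square)
    also have "\<dots> = (\<Sum>i\<in>F. infsum (\<lambda>j. w i * X j i * cnj (x j)) UNIV)"
      unfolding cw by (simp add: infsum_cmult_right'[symmetric] mult.assoc)
    also have "\<dots> = infsum (\<lambda>j. \<Sum>i\<in>F. w i * X j i * cnj (x j)) UNIV"
    proof (rule infsum_sum_swap[OF fF, THEN conjunct1, symmetric])
      fix i
      have e: "(\<lambda>j. X j i * cnj (x j)) = (\<lambda>j. cnj (cnj (X j i) * x j))" by simp
      have "(\<lambda>j. X j i * cnj (x j)) summable_on UNIV" by (simp only: e summable_on_cnj_iff sm)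
      then show "(\<lambda>j. w i * X j i * cnj (x j)) summable_on UNIV"
        using summable_on_cmult_right[of _ UNIV "w i"] by (simp add: mult.assoc)
    qed
    also have "\<dots> = infsum (\<lambda>j. mapply X u j * cnj (x j)) UNIV"
      unfolding Xu by (rule infsum_cong) (simp add: sum_distrib_left sum_distrib_right mult.commute mult.left_commute)
    finally have eq: "complex_of_real (\<Sum>i\<in>F. (cmod (w i))^2) = infsum (\<lambda>j. mapply X u j * cnj (x j)) UNIV" .
    have Xul2: "mapply X u \<in> l2" and Xun: "l2norm (mapply X u) \<le> c * l2norm u" using nrmD[OF X u(1)] by auto
    have cx: "(\<lambda>j. cnj (x j)) \<in> l2" "l2norm (\<lambda>j. cnj (x j)) = l2norm x" using l2_cnj[OF x] by auto
    have P: "(\<lambda>j. cmod (mapply X u j * cnj (x j))) summable_on UNIV"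
       "infsum (\<lambda>j. cmod (mapply X u j * cnj (x j))) UNIV \<le> l2norm (mapply X u) * l2norm x"
      using l2_prod[OF Xul2 cx(1)] cx(2) by auto
    have nn: "0 \<le> (\<Sum>i\<in>F. (cmod (w i))^2)" by (simp add: sum_nonneg)
    have "(\<Sum>i\<in>F. (cmod (w i))^2) = cmod (complex_of_real (\<Sum>i\<in>F. (cmod (w i))^2))"
      unfolding norm_of_real using nn by (rule abs_of_nonneg[symmetric])
    also have "\<dots> \<le> infsum (\<lambda>j. cmod (mapply X u j * cnj (x j))) UNIV"
      unfolding eq by (rule norm_infsum_bound) (use P in auto)
    also have "\<dots> \<le> l2norm (mapply X u) * l2norm x" by (rule P(2))
    also have "\<dots> \<le> c * l2norm u * l2norm x" using Xun l2norm_nonneg[of x] by (intro mult_right_mono) auto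
    also have "\<dots> = (c * l2norm x) * sqrt (\<Sum>i\<in>F. (cmod (w i))^2)"
    proof -
      have un: "l2norm u = sqrt (\<Sum>i\<in>F. (cmod (w i))^2)" unfolding u(2)[symmetric] using l2norm_nonneg[of u] by simp
      show ?thesis by (simp add: un algebra_simps)
    qed
    finally have "(\<Sum>i\<in>F. (cmod (w i))^2) \<le> (c * l2norm x) * sqrt (\<Sum>i\<in>F. (cmod (w i))^2)" .
    then show ?thesis by (rule sq_le_sqrt_bound[rotated 2]) (use c0 l2norm_nonneg[of x] in \<open>auto simp: sum_nonneg\<close>)
  qed
  have R: "w \<in> l2 \<and> l2norm w \<le> c * l2norm x"
    by (rule sumbound_l2) (use bound c0 l2norm_nonneg[of x] in auto)
  then show "mapply (madj X) x \<in> l2" "l2norm (mapply (madj X) x) \<le> c * l2norm x" by (auto simp: w_def)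
qed

lemma opnorm_nrm:
  assumes "bounded_op X"
  shows "nrm_le X (opnorm X)"
proof -
  obtain C where C: "nrm_le X C" using assms bounded_op_nrm by blast
  define S where "S = {l2norm (mapply X x) | x. x \<in> l2 \<and> l2norm x \<le> 1}"
  have bdd: "bdd_above S"
    unfolding S_def
  proof (rule bdd_aboveI[where M=C])
    fix s assume "s \<in> {l2norm (mapply X x) | x. x \<in> l2 \<and> l2norm x \<le> 1}"
    then obtain x where x: "x \<in> l2" "l2norm x \<le> 1" and s: "s = l2norm (mapply X x)" by blast
    have "l2norm (mapply X x) \<le> C * l2norm x" using nrmD(3)[OF C x(1)] .
    also have "\<dots> \<le> C * 1" using x(2) nrm_nonneg[OF C] by (intro mult_left_mono) auto
    finally show "s \<le> C" using s by simp
  qed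
  show ?thesis unfolding nrm_le_def
  proof (intro ballI conjI allI)
    fix x assume x: "x \<in> l2"
    show "(\<lambda>j. X i j * x j) summable_on UNIV" for i using nrmD[OF C x] by auto
    show "mapply X x \<in> l2" using nrmD[OF C x] by auto
    show "l2norm (mapply X x) \<le> opnorm X * l2norm x"
    proof (cases "l2norm x = 0")
      case True
      have "mapply X x = (\<lambda>i. 0)" unfolding mapply_def using l2_zero_comp[OF x True] by simp
      then have "l2norm (mapply X x) = 0" by (simp add: l2norm_def)
      then show ?thesis using True by simp
    next
      case False
      then have p: "l2norm x > 0" using l2norm_nonneg[of x] by simp
      define y where "y = (\<lambda>k. complex_of_real (1 / l2norm x) * x k)"
      have cm: "cmod (complex_of_real (1 / l2norm x)) = 1 / l2norm x" using p
        by (simp only: norm_of_real) simp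
      have y0: "y \<in> l2" "l2norm y = cmod (complex_of_real (1 / l2norm x)) * l2norm x"
        using l2_scale[OF x, of "complex_of_real (1 / l2norm x)"] unfolding y_def by blast+
      have y: "y \<in> l2" "l2norm y = 1" using y0 p unfolding cm by auto
      have "l2norm (mapply X y) \<in> S" unfolding S_def using y p by auto
      then have le: "l2norm (mapply X y) \<le> opnorm X" unfolding opnorm_def S_def[symmetric]
        using bdd by (rule cSup_upper)
      have "mapply X y = (\<lambda>i. complex_of_real (1 / l2norm x) * mapply X x i)"
        unfolding y_def by (rule mapply_scale)
      moreover have "l2norm (\<lambda>i. complex_of_real (1 / l2norm x) * mapply X x i) = cmod (complex_of_real (1 / l2norm x)) * l2norm (mapply X x)"
        using l2_scale[OF nrmD(2)[OF C x], of "complex_of_real (1 / l2norm x)"] by blast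
      ultimately have "l2norm (mapply X y) = cmod (complex_of_real (1 / l2norm x)) * l2norm (mapply X x)"
        by (simp only:)
      then have "l2norm (mapply X y) = 1 / l2norm x * l2norm (mapply X x)" unfolding cm .
      then have "l2norm (mapply X x) / l2norm x \<le> opnorm X" using le by simp
      then show ?thesis using p by (simp add: divide_le_eq mult.commute)
    qed
  qed
qed



lemma hl_const: "has_limits_pm (\<lambda>_. c)"
  unfolding has_limits_pm_def by auto

lemma hl_add: "has_limits_pm f \<Longrightarrow> has_limits_pm g \<Longrightarrow> has_limits_pm (\<lambda>k. f k + g k)"
  unfolding has_limits_pm_def by (auto intro: tendsto_add)

lemma hl_mult: "has_limits_pm f \<Longrightarrow> has_limits_pm g \<Longrightarrow> has_limits_pm (\<lambda>k. f k * g k)"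
  unfolding has_limits_pm_def by (auto intro: tendsto_mult)

lemma hl_cnj: "has_limits_pm f \<Longrightarrow> has_limits_pm (\<lambda>k. cnj (f k))"
  unfolding has_limits_pm_def by (auto intro: tendsto_cnj)

lemma hl_sum: "finite F \<Longrightarrow> (\<And>s. s \<in> F \<Longrightarrow> has_limits_pm (f s)) \<Longrightarrow> has_limits_pm (\<lambda>k. \<Sum>s\<in>F. f s k)"
proof (induction F rule: finite_induct)
  case empty then show ?case using hl_const[of 0] by simp
next
  case (insert a F)
  then show ?case using hl_add[of "f a" "\<lambda>k. \<Sum>s\<in>F. f s k"] by simp
qed

lemma shift_top: "filterlim (\<lambda>k::int. k + s) at_top at_top"
  unfolding filterlim_at_top
proof
  fix Z :: int
  show "\<forall>\<^sub>F k in at_top. Z \<le> k + s"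
    by (rule eventually_mono[OF eventually_ge_at_top[of "Z - s"]]) simp
qed

lemma shift_bot: "filterlim (\<lambda>k::int. k + s) at_bot at_bot"
  unfolding filterlim_at_bot
proof
  fix Z :: int
  show "\<forall>\<^sub>F k in at_bot. k + s \<le> Z"
    by (rule eventually_mono[OF eventually_le_at_bot[of "Z - s"]]) simp
qed

lemma hl_shift: "has_limits_pm f \<Longrightarrow> has_limits_pm (\<lambda>k. f (k + s))"
  unfolding has_limits_pm_def
  using filterlim_compose[OF _ shift_top[of s], of f] filterlim_compose[OF _ shift_bot[of s], of f]
  by blast

lemma hl_bounded:
  assumes "has_limits_pm f"
  shows "\<exists>K\<ge>0. \<forall>k. cmod (f k) \<le> K"
proof -
  obtain L1 L2 where L1: "(f \<longlongrightarrow> L1) at_top" and L2: "(f \<longlongrightarrow> L2) at_bot"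
    using assms unfolding has_limits_pm_def by blast
  have "\<forall>\<^sub>F k in at_top. dist (f k) L1 < 1" by (rule tendstoD[OF L1]) simp
  then obtain N1 where N1: "\<And>k. k \<ge> N1 \<Longrightarrow> dist (f k) L1 < 1"
    unfolding eventually_at_top_linorder by blast
  have "\<forall>\<^sub>F k in at_bot. dist (f k) L2 < 1" by (rule tendstoD[OF L2]) simp
  then obtain N2 where N2: "\<And>k. k \<le> N2 \<Longrightarrow> dist (f k) L2 < 1"
    unfolding eventually_at_bot_linorder by blast
  define K where "K = (cmod L1 + 1) + (cmod L2 + 1) + (\<Sum>k\<in>{N2..N1}. cmod (f k))"
  have s0: "0 \<le> (\<Sum>k\<in>{N2..N1}. cmod (f k))" by (simp add: sum_nonneg)
  have "cmod (f k) \<le> K" for k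
  proof -
    consider "k \<ge> N1" | "k \<le> N2" | "N2 \<le> k \<and> k \<le> N1" by linarith
    then show ?thesis
    proof cases
      case 1
      then have "cmod (f k) \<le> cmod L1 + 1" using N1[of k] norm_triangle_ineq2[of "f k" L1]
        by (simp add: dist_norm)
      then show ?thesis using s0 norm_ge_zero[of L2] unfolding K_def by linarith
    next
      case 2
      then have "cmod (f k) \<le> cmod L2 + 1" using N2[of k] norm_triangle_ineq2[of "f k" L2]
        by (simp add: dist_norm)
      then show ?thesis using s0 norm_ge_zero[of L1] unfolding K_def by linarith
    next
      case 3
      then have "cmod (f k) \<le> (\<Sum>k\<in>{N2..N1}. cmod (f k))"
        by (intro member_le_sum) auto
      then show ?thesis using norm_ge_zero[of L1] norm_ge_zero[of L2] unfolding K_def by linarith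
    qed
  qed
  moreover have "K \<ge> 0" using s0 unfolding K_def by simp
  ultimately show ?thesis by blast
qed

definition W :: "int \<Rightarrow> (int \<Rightarrow> complex) \<Rightarrow> mat" where
  "W m w = (\<lambda>i j. if i = j + m then w j else 0)"

lemma mapply_W: "mapply (W m w) x = (\<lambda>i. w (i - m) * x (i - m))"
  unfolding mapply_def W_def
  by (rule ext, subst infsum_single0[where a="i - m" for i]) auto

lemma nrm_W:
  assumes K: "\<And>j. cmod (w j) \<le> K" and K0: "0 \<le> K"
  shows "nrm_le (W m w) K"
  unfolding nrm_le_def
proof (intro ballI conjI allI)
  fix x assume x: "x \<in> l2"
  show "(\<lambda>j. W m w i j * x j) summable_on UNIV" for i
  proof -
    have "((\<lambda>j. W m w i j * x j) has_sum (W m w i (i - m) * x (i - m))) UNIV"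
      by (rule has_sum_single0) (auto simp: W_def)
    then show ?thesis by (auto simp: summable_on_def)
  qed
  have sh: "((\<lambda>i. (cmod (x (i - m)))^2) has_sum (l2norm x)^2) UNIV"
  proof -
    have "((\<lambda>i. (cmod (x (i - m)))^2) has_sum (l2norm x)^2) UNIV \<longleftrightarrow> ((\<lambda>k. (cmod (x k))^2) has_sum (l2norm x)^2) UNIV"
      by (rule has_sum_reindex_bij_witness[where i="\<lambda>k. k + m" and j="\<lambda>i. i - m"]) auto
    then show ?thesis using l2_hassum[OF x] by simp
  qed
  have h2: "((\<lambda>i. K^2 * (cmod (x (i - m)))^2) has_sum K^2 * (l2norm x)^2) UNIV"
    by (rule has_sum_cmult_right[OF sh])
  have pw: "(cmod (w (i - m) * x (i - m)))^2 \<le> K^2 * (cmod (x (i - m)))^2" for i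
  proof -
    have "cmod (w (i - m) * x (i - m)) \<le> K * cmod (x (i - m))"
      unfolding norm_mult by (rule mult_right_mono[OF K]) simp
    then have "(cmod (w (i - m) * x (i - m)))^2 \<le> (K * cmod (x (i - m)))^2"
      by (intro power_mono) auto
    then show ?thesis by (simp add: power_mult_distrib)
  qed
  have s: "(\<lambda>i. (cmod (w (i - m) * x (i - m)))^2) summable_on UNIV"
    by (rule summable_on_comparison_test[OF has_sum_imp_summable[OF h2]]) (use pw in auto)
  then show "mapply (W m w) x \<in> l2" unfolding mapply_W l2_def by simp
  have "infsum (\<lambda>i. (cmod (w (i - m) * x (i - m)))^2) UNIV \<le> K^2 * (l2norm x)^2"
    by (rule has_sum_mono[OF has_sum_infsum[OF s] h2]) (use pw in auto)
  moreover have "(l2norm (mapply (W m w) x))^2 = infsum (\<lambda>i. (cmod (w (i - m) * x (i - m)))^2) UNIV"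
    unfolding mapply_W by (rule l2normsq)
  ultimately have "(l2norm (mapply (W m w) x))^2 \<le> (K * l2norm x)^2"
    by (simp add: power_mult_distrib)
  then show "l2norm (mapply (W m w) x) \<le> K * l2norm x"
    by (rule power2_le_imp_le) (simp add: K0 l2norm_nonneg)
qed

definition bandB :: "mat set" where
  "bandB = {P. \<exists>N. finite N \<and> (\<forall>i j. i - j \<notin> N \<longrightarrow> P i j = 0) \<and> (\<forall>m. has_limits_pm (\<lambda>k. P (k + m) k))}"

lemma band_decomp:
  assumes "finite N" "\<forall>i j. i - j \<notin> N \<longrightarrow> P i j = 0"
  shows "P = (\<lambda>i j. \<Sum>m\<in>N. W m (\<lambda>k. P (k + m) k) i j)"
proof (intro ext)
  fix i j
  have e: "W m (\<lambda>k. P (k + m) k) i j = (if m = i - j then P i j else 0)" for m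
    by (auto simp: W_def)
  have "(\<Sum>m\<in>N. W m (\<lambda>k. P (k + m) k) i j) = (if i - j \<in> N then P i j else 0)"
    unfolding e using assms(1) by simp
  then show "P i j = (\<Sum>m\<in>N. W m (\<lambda>k. P (k + m) k) i j)" using assms(2) by auto
qed

lemma band_bounded:
  assumes "P \<in> bandB" shows "\<exists>K. nrm_le P K"
proof -
  obtain N where N: "finite N" "\<forall>i j. i - j \<notin> N \<longrightarrow> P i j = 0" "\<forall>m. has_limits_pm (\<lambda>k. P (k + m) k)"
    using assms unfolding bandB_def by blast
  have "\<forall>m. \<exists>K\<ge>0. \<forall>k. cmod (P (k + m) k) \<le> K" using N(3) hl_bounded by blast
  then have "\<exists>K. \<forall>m. K m \<ge> 0 \<and> (\<forall>k. cmod (P (k + m) k) \<le> K m)" by (rule choice)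
  then obtain K where K: "\<And>m. K m \<ge> 0" "\<And>m k. cmod (P (k + m) k) \<le> K m" by blast
  have "nrm_le (\<lambda>i j. \<Sum>m\<in>N. W m (\<lambda>k. P (k + m) k) i j) (\<Sum>m\<in>N. K m)"
    by (rule nrm_sum[OF N(1)]) (auto intro!: nrm_W K)
  moreover have eq: "(\<lambda>i j. \<Sum>m\<in>N. W m (\<lambda>k. P (k + m) k) i j) = P"
    using band_decomp[OF N(1,2)] by (rule sym)
  ultimately have "nrm_le P (\<Sum>m\<in>N. K m)" by simp
  then show ?thesis by blast
qed



lemma band_U: "Upow 1 \<in> bandB"
proof -
  have "(\<lambda>k. Upow 1 (k + m) k) = (\<lambda>_. if m = 1 then 1 else 0)" for m by (auto simp: Upow_def)
  then show ?thesis unfolding bandB_def using hl_const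
    by (intro CollectI exI[of _ "{1}"]) (auto simp: Upow_def)
qed

lemma band_diag: "has_limits_pm a \<Longrightarrow> diagop a \<in> bandB"
proof -
  assume a: "has_limits_pm a"
  have "has_limits_pm (\<lambda>k. diagop a (k + m) k)" for m
  proof (cases "m = 0")
    case True
    then have "(\<lambda>k. diagop a (k + m) k) = a" by (auto simp: diagop_def)
    then show ?thesis using a by simp
  next
    case False
    then have "(\<lambda>k. diagop a (k + m) k) = (\<lambda>_. 0)" by (auto simp: diagop_def)
    then show ?thesis using hl_const by simp
  qed
  then show ?thesis unfolding bandB_def
    by (intro CollectI exI[of _ "{0}"]) (auto simp: diagop_def)
qed

lemma band_add: "P \<in> bandB \<Longrightarrow> Q \<in> bandB \<Longrightarrow> madd P Q \<in> bandB"
proof -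
  assume P: "P \<in> bandB" and Q: "Q \<in> bandB"
  obtain N1 where N1: "finite N1" "\<forall>i j. i - j \<notin> N1 \<longrightarrow> P i j = 0" "\<forall>m. has_limits_pm (\<lambda>k. P (k + m) k)"
    using P unfolding bandB_def by blast
  obtain N2 where N2: "finite N2" "\<forall>i j. i - j \<notin> N2 \<longrightarrow> Q i j = 0" "\<forall>m. has_limits_pm (\<lambda>k. Q (k + m) k)"
    using Q unfolding bandB_def by blast
  show ?thesis unfolding bandB_def madd_def
    by (intro CollectI exI[of _ "N1 \<union> N2"]) (use N1 N2 hl_add in auto)
qed

lemma band_scale: "P \<in> bandB \<Longrightarrow> mscale c P \<in> bandB"
proof -
  assume P: "P \<in> bandB"
  obtain N1 where N1: "finite N1" "\<forall>i j. i - j \<notin> N1 \<longrightarrow> P i j = 0" "\<forall>m. has_limits_pm (\<lambda>k. P (k + m) k)"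
    using P unfolding bandB_def by blast
  show ?thesis unfolding bandB_def mscale_def
    by (intro CollectI exI[of _ "N1"]) (use N1 hl_mult[OF hl_const] in auto)
qed

lemma band_adj: "P \<in> bandB \<Longrightarrow> madj P \<in> bandB"
proof -
  assume P: "P \<in> bandB"
  obtain N1 where N1: "finite N1" "\<forall>i j. i - j \<notin> N1 \<longrightarrow> P i j = 0" "\<forall>m. has_limits_pm (\<lambda>k. P (k + m) k)"
    using P unfolding bandB_def by blast
  have d: "has_limits_pm (\<lambda>k. madj P (k + m) k)" for m
  proof -
    have "has_limits_pm (\<lambda>k. P ((k + m) + (- m)) (k + m))"
      using hl_shift[OF N1(3)[rule_format, of "- m"], of m] by simp
    then have "has_limits_pm (\<lambda>k. P k (k + m))" by simp
    then show ?thesis unfolding madj_def by (rule hl_cnj)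
  qed
  have b: "\<forall>i j. i - j \<notin> uminus ` N1 \<longrightarrow> madj P i j = 0"
  proof (intro allI impI)
    fix i j assume "i - j \<notin> uminus ` N1"
    then have "j - i \<notin> N1" by (metis minus_diff_eq rev_image_eqI)
    then show "madj P i j = 0" using N1(2) by (simp add: madj_def)
  qed
  show ?thesis unfolding bandB_def
    by (intro CollectI exI[of _ "uminus ` N1"]) (use N1(1) b d in auto)
qed

lemma band_mmult_formula:
  assumes "finite N2" "\<forall>i j. i - j \<notin> N2 \<longrightarrow> Q i j = 0"
  shows "mmult P Q i k = (\<Sum>s\<in>N2. P i (k + s) * Q (k + s) k)"
proof -
  have "mmult P Q i k = infsum (\<lambda>j. P i j * Q j k) ((\<lambda>s. k + s) ` N2)"
    unfolding mmult_def
  proof (rule infsum_cong_neutral)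
    fix j assume "j \<in> UNIV - (\<lambda>s. k + s) ` N2"
    then have "j - k \<notin> N2" by force
    then show "P i j * Q j k = 0" using assms(2) by simp
  qed auto
  also have "\<dots> = (\<Sum>j\<in>(\<lambda>s. k + s) ` N2. P i j * Q j k)" using assms(1) by simp
  also have "\<dots> = (\<Sum>s\<in>N2. P i (k + s) * Q (k + s) k)"
    by (subst sum.reindex) (auto simp: inj_on_def)
  finally show ?thesis .
qed

lemma band_mult: "P \<in> bandB \<Longrightarrow> Q \<in> bandB \<Longrightarrow> mmult P Q \<in> bandB"
proof -
  assume P: "P \<in> bandB" and Q: "Q \<in> bandB"
  obtain N1 where N1: "finite N1" "\<forall>i j. i - j \<notin> N1 \<longrightarrow> P i j = 0" "\<forall>m. has_limits_pm (\<lambda>k. P (k + m) k)"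
    using P unfolding bandB_def by blast
  obtain N2 where N2: "finite N2" "\<forall>i j. i - j \<notin> N2 \<longrightarrow> Q i j = 0" "\<forall>m. has_limits_pm (\<lambda>k. Q (k + m) k)"
    using Q unfolding bandB_def by blast
  note F = band_mmult_formula[OF N2(1,2), of P]
  define N where "N = (\<lambda>(a, b). a + b) ` (N1 \<times> N2)"
  have fN: "finite N" unfolding N_def using N1(1) N2(1) by simp
  have b: "\<forall>i j. i - j \<notin> N \<longrightarrow> mmult P Q i j = 0"
  proof (intro allI impI)
    fix i j assume ij: "i - j \<notin> N"
    have "P i (j + s) = 0" if s: "s \<in> N2" for s
    proof -
      have "i - (j + s) \<notin> N1"
      proof
        assume "i - (j + s) \<in> N1"
        then have "(i - (j + s), s) \<in> N1 \<times> N2" using s by simp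
        then have "i - j \<in> N" unfolding N_def by (force intro: image_eqI)
        then show False using ij by simp
      qed
      then show ?thesis using N1(2) by simp
    qed
    then show "mmult P Q i j = 0" unfolding F by simp
  qed
  have d: "has_limits_pm (\<lambda>k. mmult P Q (k + m) k)" for m
  proof -
    have t: "has_limits_pm (\<lambda>k. P (k + m) (k + s) * Q (k + s) k)" for s
    proof -
      have "has_limits_pm (\<lambda>k. P ((k + s) + (m - s)) (k + s))"
        using hl_shift[OF N1(3)[rule_format, of "m - s"], of s] by simp
      then have "has_limits_pm (\<lambda>k. P (k + m) (k + s))" by simp
      then show ?thesis by (rule hl_mult) (use N2(3) in simp)
    qed
    show ?thesis unfolding F by (rule hl_sum[OF N2(1)]) (rule t)
  qed
  show ?thesis unfolding bandB_def
    by (intro CollectI exI[of _ N]) (use fN b d in auto)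
qed

definition S0 :: "mat set" where
  "S0 = {M. bounded_op M \<and> (\<forall>e>0. \<exists>P\<in>bandB. nrm_le (mdiff M P) e)}"

lemma band_S0: "P \<in> bandB \<Longrightarrow> P \<in> S0"
proof -
  assume P: "P \<in> bandB"
  have z: "mdiff P P = (\<lambda>i j. 0)" by (auto simp: mdiff_def)
  have "nrm_le (mdiff P P) e" if "e > 0" for e unfolding z using that by (intro nrm_zero) simp
  then show ?thesis unfolding S0_def bounded_op_nrm
    using band_bounded[OF P] P by blast
qed

lemma nrm_of_bounded: "bounded_op M \<Longrightarrow> \<exists>c. nrm_le M c"
  by (simp add: bounded_op_nrm)

lemma S0_add: "M \<in> S0 \<Longrightarrow> N \<in> S0 \<Longrightarrow> madd M N \<in> S0"
proof -
  assume M: "M \<in> S0" and N: "N \<in> S0"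
  obtain cM cN where cM: "nrm_le M cM" and cN: "nrm_le N cN" using M N unfolding S0_def bounded_op_nrm by blast
  have bd: "bounded_op (madd M N)" unfolding bounded_op_nrm using nrm_madd[OF cM cN] by blast
  have "\<exists>P\<in>bandB. nrm_le (mdiff (madd M N) P) e" if e: "e > 0" for e
  proof -
    obtain P where P: "P \<in> bandB" "nrm_le (mdiff M P) (e/2)" using M half_gt_zero[OF e] unfolding S0_def by blast
    obtain Q where Q: "Q \<in> bandB" "nrm_le (mdiff N Q) (e/2)" using N half_gt_zero[OF e] unfolding S0_def by blast
    have eq: "mdiff (madd M N) (madd P Q) = madd (mdiff M P) (mdiff N Q)"
      by (auto simp: mdiff_def madd_def intro!: ext)
    have "nrm_le (mdiff (madd M N) (madd P Q)) (e/2 + e/2)" unfolding eq by (rule nrm_madd[OF P(2) Q(2)])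
    then show ?thesis using band_add[OF P(1) Q(1)] by auto
  qed
  then show ?thesis using bd unfolding S0_def by auto
qed

lemma S0_scale: "M \<in> S0 \<Longrightarrow> mscale c M \<in> S0"
proof -
  assume M: "M \<in> S0"
  obtain cM where cM: "nrm_le M cM" using M unfolding S0_def bounded_op_nrm by blast
  have bd: "bounded_op (mscale c M)" unfolding bounded_op_nrm using nrm_mscale[OF cM] by blast
  have "\<exists>P\<in>bandB. nrm_le (mdiff (mscale c M) P) e" if e: "e > 0" for e
  proof -
    have e': "e / (cmod c + 1) > 0" using e norm_ge_zero[of c] by (intro divide_pos_pos) linarith+
    obtain P where P: "P \<in> bandB" "nrm_le (mdiff M P) (e / (cmod c + 1))" using M e' unfolding S0_def by blast
    have eq: "mdiff (mscale c M) (mscale c P) = mscale c (mdiff M P)"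
      by (auto simp: mdiff_def mscale_def algebra_simps)
    have "nrm_le (mdiff (mscale c M) (mscale c P)) (cmod c * (e / (cmod c + 1)))" unfolding eq by (rule nrm_mscale[OF P(2)])
    moreover have "cmod c * (e / (cmod c + 1)) \<le> e" using e
      by (simp add: field_simps add_pos_nonneg)
    ultimately have "nrm_le (mdiff (mscale c M) (mscale c P)) e" by (rule nrm_mono)
    then show ?thesis using band_scale[OF P(1)] by auto
  qed
  then show ?thesis using bd unfolding S0_def by auto
qed

lemma madj_mdiff: "madj (mdiff A B) = mdiff (madj A) (madj B)"
  by (auto simp: madj_def mdiff_def)

lemma S0_adj: "M \<in> S0 \<Longrightarrow> madj M \<in> S0"
proof -
  assume M: "M \<in> S0"
  obtain cM where cM: "nrm_le M cM" using M unfolding S0_def bounded_op_nrm by blast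
  have bd: "bounded_op (madj M)" unfolding bounded_op_nrm using nrm_madj[OF cM] by blast
  have "\<exists>P\<in>bandB. nrm_le (mdiff (madj M) P) e" if e: "e > 0" for e
  proof -
    obtain P where P: "P \<in> bandB" "nrm_le (mdiff M P) e" using M e unfolding S0_def by blast
    have "nrm_le (mdiff (madj M) (madj P)) e" using nrm_madj[OF P(2)] unfolding madj_mdiff .
    then show ?thesis using band_adj[OF P(1)] by auto
  qed
  then show ?thesis using bd unfolding S0_def by auto
qed

lemma mmult_diff_split:
  assumes "nrm_le M a" "nrm_le N b" "nrm_le P c" "nrm_le Q d"
  shows "mdiff (mmult M N) (mmult P Q) = madd (mmult M (mdiff N Q)) (mmult (mdiff M P) Q)"
proof (intro ext)
  fix i k
  have s1: "(\<lambda>j. M i j * N j k) summable_on UNIV" using nrmD(1)[OF assms(1) nrm_col[OF assms(2), THEN conjunct1]] .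
  have s2: "(\<lambda>j. M i j * Q j k) summable_on UNIV" using nrmD(1)[OF assms(1) nrm_col[OF assms(4), THEN conjunct1]] .
  have s3: "(\<lambda>j. P i j * Q j k) summable_on UNIV" using nrmD(1)[OF assms(3) nrm_col[OF assms(4), THEN conjunct1]] .
  have "mmult M N i k - mmult P Q i k = (infsum (\<lambda>j. M i j * N j k) UNIV - infsum (\<lambda>j. M i j * Q j k) UNIV)
      + (infsum (\<lambda>j. M i j * Q j k) UNIV - infsum (\<lambda>j. P i j * Q j k) UNIV)"
    by (simp add: mmult_def)
  also have "infsum (\<lambda>j. M i j * N j k) UNIV - infsum (\<lambda>j. M i j * Q j k) UNIV = infsum (\<lambda>j. M i j * N j k - M i j * Q j k) UNIV"
    using infsum_add[OF s1 summable_on_cmult_right[OF s2, of "-1"]] infsum_cmult_right'[of "-1" "\<lambda>j. M i j * Q j k" UNIV] by simp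
  also have "infsum (\<lambda>j. M i j * Q j k) UNIV - infsum (\<lambda>j. P i j * Q j k) UNIV = infsum (\<lambda>j. M i j * Q j k - P i j * Q j k) UNIV"
    using infsum_add[OF s2 summable_on_cmult_right[OF s3, of "-1"]] infsum_cmult_right'[of "-1" "\<lambda>j. P i j * Q j k" UNIV] by simp
  finally show "mdiff (mmult M N) (mmult P Q) i k = madd (mmult M (mdiff N Q)) (mmult (mdiff M P) Q) i k"
    by (simp add: mdiff_def madd_def mmult_def algebra_simps)
qed

lemma S0_mult: "M \<in> S0 \<Longrightarrow> N \<in> S0 \<Longrightarrow> mmult M N \<in> S0"
proof -
  assume M: "M \<in> S0" and N: "N \<in> S0"
  obtain cM cN where cM: "nrm_le M cM" and cN: "nrm_le N cN" using M N unfolding S0_def bounded_op_nrm by blast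
  have cM0: "cM \<ge> 0" and cN0: "cN \<ge> 0" using nrm_nonneg cM cN by auto
  have bd: "bounded_op (mmult M N)" unfolding bounded_op_nrm using nrm_mmult[OF cM cN] by blast
  have "\<exists>P\<in>bandB. nrm_le (mdiff (mmult M N) P) e" if e: "e > 0" for e
  proof -
    define d where "d = min 1 (e / (cM + cN + 2))"
    have d0: "d > 0" using e cM0 cN0 by (simp add: d_def)
    have d1: "d \<le> 1" and d2: "d \<le> e / (cM + cN + 2)" by (auto simp: d_def)
    obtain P where P: "P \<in> bandB" "nrm_le (mdiff M P) d" using M d0 unfolding S0_def by blast
    obtain Q where Q: "Q \<in> bandB" "nrm_le (mdiff N Q) d" using N d0 unfolding S0_def by blast
    obtain cP where cP: "nrm_le P cP" using band_bounded[OF P(1)] by blast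
    obtain cQ where cQ: "nrm_le Q cQ" using band_bounded[OF Q(1)] by blast
    have NQ: "mdiff N (mdiff N Q) = Q" by (auto simp: mdiff_def)
    have cQ': "nrm_le Q (cN + d)" using nrm_mdiff[OF cN Q(2)] unfolding NQ .
    have "nrm_le (madd (mmult M (mdiff N Q)) (mmult (mdiff M P) Q)) (cM * d + d * (cN + d))"
      by (rule nrm_madd[OF nrm_mmult[OF cM Q(2)] nrm_mmult[OF P(2) cQ']])
    moreover have "cM * d + d * (cN + d) \<le> e"
    proof -
      have "cM * d + d * (cN + d) = d * (cM + cN + d)" by (simp add: algebra_simps)
      also have "\<dots> \<le> d * (cM + cN + 2)" using d0 d1 by (intro mult_left_mono) auto
      also have "\<dots> \<le> e / (cM + cN + 2) * (cM + cN + 2)" using d2 cM0 cN0 by (intro mult_right_mono) auto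
      also have "\<dots> = e" using cM0 cN0 by simp
      finally show ?thesis .
    qed
    ultimately have "nrm_le (madd (mmult M (mdiff N Q)) (mmult (mdiff M P) Q)) e" by (rule nrm_mono)
    then have "nrm_le (mdiff (mmult M N) (mmult P Q)) e" unfolding mmult_diff_split[OF cM cN cP cQ] .
    then show ?thesis using band_mult[OF P(1) Q(1)] by auto
  qed
  then show ?thesis using bd unfolding S0_def by auto
qed

lemma S0_lim:
  assumes f: "\<forall>m::nat. f m \<in> S0" and bM: "bounded_op M" and lim: "(\<lambda>m. opnorm (mdiff (f m) M)) \<longlonglongrightarrow> 0"
  shows "M \<in> S0"
proof -
  have "\<exists>P\<in>bandB. nrm_le (mdiff M P) e" if e: "e > 0" for e
  proof -
    obtain m where m: "norm (opnorm (mdiff (f m) M) - 0) < e/2" using LIMSEQ_D[OF lim, of "e/2"] e by auto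
    obtain c1 c2 where c1: "nrm_le (f m) c1" and c2: "nrm_le M c2"
      using f bM unfolding S0_def bounded_op_nrm by blast
    have bd: "bounded_op (mdiff (f m) M)" unfolding bounded_op_nrm using nrm_mdiff[OF c1 c2] by blast
    have n1: "nrm_le (mdiff (f m) M) (opnorm (mdiff (f m) M))" by (rule opnorm_nrm[OF bd])
    have eq1: "mdiff M (f m) = mscale (-1) (mdiff (f m) M)" by (auto simp: mdiff_def mscale_def)
    have n2: "nrm_le (mdiff M (f m)) (opnorm (mdiff (f m) M))" unfolding eq1 using nrm_mscale[OF n1, of "-1"] by simp
    obtain P where P: "P \<in> bandB" "nrm_le (mdiff (f m) P) (e/2)" using f half_gt_zero[OF e] unfolding S0_def by blast
    have eq2: "mdiff M P = madd (mdiff M (f m)) (mdiff (f m) P)" by (auto simp: mdiff_def madd_def)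
    have "nrm_le (mdiff M P) (opnorm (mdiff (f m) M) + e/2)" unfolding eq2 by (rule nrm_madd[OF n2 P(2)])
    moreover have "opnorm (mdiff (f m) M) + e/2 \<le> e" using m by simp
    ultimately have "nrm_le (mdiff M P) e" by (rule nrm_mono)
    then show ?thesis using P(1) by auto
  qed
  then show ?thesis using bM unfolding S0_def by auto
qed

lemma Cstar_S0: "Cstar_A \<subseteq> S0"
  unfolding Cstar_A_def
proof (rule Inter_lower, intro CollectI conjI)
  show "S0 \<subseteq> {M. bounded_op M}" unfolding S0_def by auto
  show "Upow 1 \<in> S0" by (rule band_S0[OF band_U])
  show "\<forall>a. has_limits_pm a \<longrightarrow> diagop a \<in> S0" using band_S0 band_diag by blast
  show "\<forall>M\<in>S0. \<forall>N\<in>S0. madd M N \<in> S0 \<and> mmult M N \<in> S0" using S0_add S0_mult by blast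
  show "\<forall>c. \<forall>M\<in>S0. mscale c M \<in> S0" using S0_scale by blast
  show "\<forall>M\<in>S0. madj M \<in> S0" using S0_adj by blast
  show "\<forall>f M. (\<forall>m. f m \<in> S0) \<and> bounded_op M \<and> (\<lambda>m. opnorm (mdiff (f m) M)) \<longlonglongrightarrow> 0 \<longrightarrow> M \<in> S0"
    using S0_lim by blast
qed

lemma approx_lim:
  fixes g :: "int \<Rightarrow> complex" and F :: "int filter"
  assumes F: "\<not> trivial_limit F"
    and ap: "\<And>e. e > 0 \<Longrightarrow> \<exists>h. (\<exists>L. (h \<longlongrightarrow> L) F) \<and> (\<forall>k. cmod (g k - h k) \<le> e)"
  shows "\<exists>L. (g \<longlongrightarrow> L) F"
proof -
  have "\<forall>n::nat. \<exists>h L. (h \<longlongrightarrow> L) F \<and> (\<forall>k. cmod (g k - h k) \<le> 1 / (real n + 1))"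
  proof
    fix n :: nat
    have "1 / (real n + 1) > 0" by simp
    then show "\<exists>h L. (h \<longlongrightarrow> L) F \<and> (\<forall>k. cmod (g k - h k) \<le> 1 / (real n + 1))" using ap by blast
  qed
  then obtain hs Ls where hs: "\<And>n. (hs n \<longlongrightarrow> Ls n) F" "\<And>n k. cmod (g k - hs n k) \<le> 1 / (real n + 1)"
    by metis
  have dL: "cmod (Ls m - Ls n) \<le> 1 / (real m + 1) + 1 / (real n + 1)" for m n
  proof (rule Lim_norm_ubound[OF F tendsto_diff[OF hs(1)[of m] hs(1)[of n]]])
    show "\<forall>\<^sub>F k in F. cmod (hs m k - hs n k) \<le> 1 / (real m + 1) + 1 / (real n + 1)"
    proof (rule always_eventually, rule allI)
      fix k
      have "cmod (hs m k - hs n k) \<le> cmod (g k - hs m k) + cmod (g k - hs n k)"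
        using norm_triangle_ineq4[of "g k - hs n k" "g k - hs m k"] by (simp add: norm_minus_commute)
      then show "cmod (hs m k - hs n k) \<le> 1 / (real m + 1) + 1 / (real n + 1)"
        using hs(2)[of k m] hs(2)[of k n] by linarith
    qed
  qed
  have "Cauchy Ls"
  proof (rule CauchyI)
    fix e :: real assume e: "e > 0"
    obtain M where M: "M > 0" "inverse (real M) < e / 2" using ex_inverse_of_nat_less[of "e/2"] e by auto
    have "cmod (Ls m - Ls n) < e" if "m \<ge> M" "n \<ge> M" for m n
    proof -
      have a: "1 / (real m + 1) \<le> inverse (real M)" using that M by (simp add: divide_simps)
      have b: "1 / (real n + 1) \<le> inverse (real M)" using that M by (simp add: divide_simps)
      show ?thesis using dL[of m n] a b M(2) by linarith
    qed
    then show "\<exists>M. \<forall>m\<ge>M. \<forall>n\<ge>M. cmod (Ls m - Ls n) < e" by blast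
  qed
  then obtain L where L: "Ls \<longlonglongrightarrow> L" unfolding Cauchy_convergent_iff convergent_def by blast
  have ul: "uniform_limit UNIV hs g sequentially"
    unfolding uniform_limit_sequentially_iff
  proof (intro allI impI)
    fix e :: real assume e: "e > 0"
    obtain M where M: "M > 0" "inverse (real M) < e" using ex_inverse_of_nat_less[of e] e by auto
    have "dist (hs n x) (g x) < e" if "n \<ge> M" for n x
    proof -
      have "1 / (real n + 1) \<le> inverse (real M)" using that M by (simp add: divide_simps)
      then show ?thesis using hs(2)[of x n] M(2) by (simp add: dist_norm norm_minus_commute)
    qed
    then show "\<exists>N. \<forall>n\<ge>N. \<forall>x\<in>UNIV. dist (hs n x) (g x) < e" by blast
  qed
  have "(g \<longlongrightarrow> L) F"
    by (rule swap_uniform_limit'[OF _ L ul]) (use hs(1) in auto)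
  then show ?thesis by blast
qed

lemma Cstar_diag:
  assumes M: "M \<in> Cstar_A"
  shows "has_limits_pm (\<lambda>k. M (k + m) k)"
proof -
  have M0: "M \<in> S0" using M Cstar_S0 by blast
  have ap: "\<exists>h. (\<exists>L. (h \<longlongrightarrow> L) F) \<and> (\<forall>k. cmod (M (k + m) k - h k) \<le> e)"
    if e: "e > 0" and F: "F = at_top \<or> F = at_bot" for e F
  proof -
    obtain P where P: "P \<in> bandB" "nrm_le (mdiff M P) e" using M0 e unfolding S0_def by blast
    have "has_limits_pm (\<lambda>k. P (k + m) k)" using P(1) unfolding bandB_def by blast
    then have "\<exists>L. ((\<lambda>k. P (k + m) k) \<longlongrightarrow> L) F" using F unfolding has_limits_pm_def by blast
    moreover have "cmod (M (k + m) k - P (k + m) k) \<le> e" for k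
      using nrm_entry[OF P(2), of "k + m" k] by (simp add: mdiff_def)
    ultimately show ?thesis by blast
  qed
  show ?thesis unfolding has_limits_pm_def
    using approx_lim[of at_top "\<lambda>k. M (k + m) k"] approx_lim[of at_bot "\<lambda>k. M (k + m) k"] ap by auto
qed



lemma mm_Upow_left: "mmult (Upow n) X = (\<lambda>i k. X (i - n) k)"
  unfolding mmult_def Upow_def
  by (rule ext, rule ext, subst infsum_single0[where a="i - n" for i]) auto

lemma mm_diag_left: "mmult (diagop a) X = (\<lambda>i k. a i * X i k)"
  unfolding mmult_def diagop_def
  by (rule ext, rule ext, subst infsum_single0[where a="i" for i]) auto

lemma mm_diag_right: "mmult X (diagop a) = (\<lambda>i k. X i k * a k)"
  unfolding mmult_def diagop_def
  by (rule ext, rule ext, subst infsum_single0[where a="k" for k]) auto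

lemma mm_W_left: "mmult (W m w) X = (\<lambda>i k. w (i - m) * X (i - m) k)"
  unfolding mmult_def W_def
  by (rule ext, rule ext, subst infsum_single0[where a="i - m" for i]) auto

lemma mm_W_right: "mmult X (W m w) = (\<lambda>i k. X i (k + m) * w k)"
  unfolding mmult_def W_def
  by (rule ext, rule ext, subst infsum_single0[where a="k + m" for k]) auto

lemma UD_W: "mmult (Upow n) (diagop b) = W n b"
  unfolding mm_Upow_left by (auto simp: diagop_def W_def intro!: ext)

lemma smooth_W: "smooth_A = {M. \<exists>N a. finite N \<and> (\<forall>n. eventually_const (a n)) \<and> M = (\<lambda>i j. \<Sum>n\<in>N. W n (a n) i j)}"
  unfolding smooth_A_def UD_W ..

lemma ec_const: "eventually_const (\<lambda>_. c)"
  unfolding eventually_const_def by auto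

lemma ec_E: "eventually_const (E k)"
  unfolding eventually_const_def E_def
  by (rule exI[of _ "\<bar>k\<bar> + 1"]) auto

lemma W_smooth: "eventually_const w \<Longrightarrow> W m w \<in> smooth_A"
  unfolding smooth_W
  by (intro CollectI exI[of _ "{m}"] exI[of _ "\<lambda>_. w"]) auto

lemma zero_smooth: "(\<lambda>i j. 0) \<in> smooth_A"
  unfolding smooth_W
  by (intro CollectI exI[of _ "{}"] exI[of _ "\<lambda>_ _. 0"]) (auto simp: ec_const)

lemma rho_eq: "rho \<phi> X = (\<lambda>i k. exp (\<i> * of_real \<phi> * of_int i) * X i k * exp (- \<i> * of_real \<phi> * of_int k))"
  unfolding rho_def mm_diag_left mm_diag_right ..

lemma rho_W: "rho \<phi> (W m w) = mscale (exp (\<i> * of_real \<phi> * of_int m)) (W m w)"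
proof (intro ext)
  fix i k
  show "rho \<phi> (W m w) i k = mscale (exp (\<i> * of_real \<phi> * of_int m)) (W m w) i k"
  proof (cases "i = k + m")
    case True
    have "exp (\<i> * of_real \<phi> * of_int i) * exp (- \<i> * of_real \<phi> * of_int k) = exp (\<i> * of_real \<phi> * of_int m)"
      unfolding mult_exp_exp True by (simp add: algebra_simps)
    then show ?thesis unfolding rho_eq mscale_def by (simp add: W_def True[symmetric] algebra_simps)
  next
    case False
    then show ?thesis unfolding rho_eq mscale_def by (simp add: W_def)
  qed
qed

lemma phase_neq:
  fixes t :: int and s :: int
  assumes "t \<noteq> 0"
  shows "exp (\<i> * of_real (pi / \<bar>of_int t\<bar>) * of_int s) \<noteq> exp (\<i> * of_real (pi / \<bar>of_int t\<bar>) * of_int (s + t))"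
proof
  define p where "p = pi / \<bar>of_int t\<bar>"
  assume eq: "exp (\<i> * of_real (pi / \<bar>of_int t\<bar>) * of_int s) = exp (\<i> * of_real (pi / \<bar>of_int t\<bar>) * of_int (s + t))"
  have "exp (\<i> * of_real p * of_int (s + t)) = exp (\<i> * of_real p * of_int s) * exp (\<i> * of_real (p * of_int t))"
    unfolding mult_exp_exp by (simp add: algebra_simps)
  moreover have "exp (\<i> * of_real (p * of_int t)) = -1"
  proof (cases "t > 0")
    case True
    then have "p * of_int t = pi" by (simp add: p_def)
    then show ?thesis by simp
  next
    case False
    then have "t < 0" using assms by simp
    then have "p * of_int t = - pi" by (simp add: p_def)
    then show ?thesis by (simp add: exp_minus)
  qed
  ultimately have "exp (\<i> * of_real p * of_int s) = - exp (\<i> * of_real p * of_int s)"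
    using eq unfolding p_def by simp
  then have "exp (\<i> * of_real p * of_int s) = 0" by simp
  then show False by simp
qed

context
  fixes d :: "mat \<Rightarrow> mat" and n :: int
  assumes D: "is_derivation d" and C: "n_covariant n d"
begin

lemma d_add: "a \<in> smooth_A \<Longrightarrow> b \<in> smooth_A \<Longrightarrow> d (madd a b) = madd (d a) (d b)"
  using D unfolding is_derivation_def by blast

lemma d_scale: "a \<in> smooth_A \<Longrightarrow> d (mscale c a) = mscale c (d a)"
  using D unfolding is_derivation_def by blast

lemma d_leib: "a \<in> smooth_A \<Longrightarrow> b \<in> smooth_A \<Longrightarrow> d (mmult a b) = madd (mmult a (d b)) (mmult (d a) b)"
  using D unfolding is_derivation_def by blast

lemma d_cstar: "a \<in> smooth_A \<Longrightarrow> d a \<in> Cstar_A"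
  using D unfolding is_derivation_def by blast

lemma d_zero: "d (\<lambda>i j. 0) = (\<lambda>i j. 0)"
proof -
  have "d (mscale 0 (\<lambda>i j. 0)) = mscale 0 (d (\<lambda>i j. 0))" by (rule d_scale[OF zero_smooth])
  then show ?thesis by (simp add: mscale_def)
qed

lemma homog:
  assumes X: "X \<in> smooth_A" and R: "\<And>\<phi>. rho \<phi> X = mscale (exp (\<i> * of_real \<phi> * of_int s)) X"
    and ne: "i - k \<noteq> n + s"
  shows "d X i k = 0"
proof -
  define t where "t = i - k - n - s"
  have t0: "t \<noteq> 0" using ne by (simp add: t_def)
  define p where "p = pi / \<bar>of_int t\<bar>"
  have p: "p \<in> {0..<2*pi}"
  proof -
    have "\<bar>real_of_int t\<bar> \<ge> 1" using t0 by linarith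
    then have "p \<le> pi" unfolding p_def using pi_gt_zero by (simp add: divide_le_eq)
    moreover have "p \<ge> 0" unfolding p_def using pi_gt_zero by simp
    moreover have "p < 2 * pi" using \<open>p \<le> pi\<close> pi_gt_zero by linarith
    ultimately show ?thesis by simp
  qed
  have cov: "d (rho p X) = mscale (exp (- \<i> * of_int n * of_real p)) (rho p (d X))"
    using C X p unfolding n_covariant_def by blast
  have "d (rho p X) = mscale (exp (\<i> * of_real p * of_int s)) (d X)"
    unfolding R by (rule d_scale[OF X])
  then have "exp (\<i> * of_real p * of_int s) * d X i k
      = exp (- \<i> * of_int n * of_real p) * (exp (\<i> * of_real p * of_int i) * d X i k * exp (- \<i> * of_real p * of_int k))"
    using cov unfolding rho_eq mscale_def by metis
  also have "\<dots> = exp (\<i> * of_real p * of_int (s + t)) * d X i k"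
  proof -
    have "exp (- \<i> * of_int n * of_real p) * (exp (\<i> * of_real p * of_int i) * exp (- \<i> * of_real p * of_int k))
       = exp (\<i> * of_real p * of_int (s + t))"
      unfolding mult_exp_exp t_def by (simp add: algebra_simps)
    then show ?thesis by (simp add: algebra_simps)
  qed
  finally have "(exp (\<i> * of_real p * of_int s) - exp (\<i> * of_real p * of_int (s + t))) * d X i k = 0"
    by (simp add: algebra_simps)
  moreover have "exp (\<i> * of_real p * of_int s) - exp (\<i> * of_real p * of_int (s + t)) \<noteq> 0"
    using phase_neq[OF t0, of s] unfolding p_def by simp
  ultimately show ?thesis by simp
qed

lemma homog_W:
  assumes "eventually_const w" "i - k \<noteq> n + m"
  shows "d (W m w) i k = 0"
  by (rule homog[OF W_smooth[OF assms(1)] rho_W assms(2)])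

end



lemma comm_W: "commutator (W n b) X = (\<lambda>i k. b (i - n) * X (i - n) k - X i (k + n) * b k)"
  unfolding commutator_def mdiff_def mm_W_left mm_W_right ..

lemma sum_smooth: "finite F \<Longrightarrow> (\<forall>m. eventually_const (a m)) \<Longrightarrow> (\<lambda>i j. \<Sum>m\<in>F. W m (a m) i j) \<in> smooth_A"
  unfolding smooth_W by blast

context
  fixes d :: "mat \<Rightarrow> mat" and n :: int
  assumes D: "is_derivation d" and C: "n_covariant n d"
begin

definition bet :: "int \<Rightarrow> complex" where "bet k = d (W 0 (E k)) (k + n) k"
definition gam :: "int \<Rightarrow> complex" where "gam k = d (W 1 (\<lambda>_. 1)) (k + n + 1) k"

lemma dW0:
  assumes a: "eventually_const a"
  shows "d (W 0 a) = W n (\<lambda>k. bet k * (a k - a (k + n)))"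
proof (intro ext)
  fix i l
  show "d (W 0 a) i l = W n (\<lambda>k. bet k * (a k - a (k + n))) i l"
  proof (cases "i = l + n")
    case False
    then show ?thesis using homog_W[OF D C a, of i l 0] by (simp add: W_def)
  next
    case True
    have prod: "mmult (W 0 a) (W 0 (E l)) = mscale (a l) (W 0 (E l))"
      unfolding mm_W_left by (auto simp: W_def mscale_def E_def intro!: ext)
    have h1: "d (mmult (W 0 a) (W 0 (E l))) = madd (mmult (W 0 a) (d (W 0 (E l)))) (mmult (d (W 0 a)) (W 0 (E l)))"
      by (rule d_leib[OF D C W_smooth[OF a] W_smooth[OF ec_E[of l]]])
    have h2: "d (mmult (W 0 a) (W 0 (E l))) = mscale (a l) (d (W 0 (E l)))"
      unfolding prod by (rule d_scale[OF D C W_smooth[OF ec_E[of l]]])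
    have "mscale (a l) (d (W 0 (E l))) = madd (mmult (W 0 a) (d (W 0 (E l)))) (mmult (d (W 0 a)) (W 0 (E l)))"
      using h1 h2 by simp
    then have "mscale (a l) (d (W 0 (E l))) (l + n) l = madd (mmult (W 0 a) (d (W 0 (E l)))) (mmult (d (W 0 a)) (W 0 (E l))) (l + n) l"
      by simp
    then have "a l * bet l = a (l + n) * bet l + d (W 0 a) (l + n) l"
      unfolding mscale_def madd_def mm_W_left mm_W_right by (simp add: W_def E_def bet_def)
    then have "d (W 0 a) (l + n) l = bet l * (a l - a (l + n))" by (simp add: algebra_simps)
    then show ?thesis using True by (simp add: W_def)
  qed
qed

lemma rel:
  assumes "n \<noteq> 0"
  shows "gam k = bet (k + 1) - bet k"
proof -
  have comm: "mmult (W 1 (\<lambda>_. 1)) (W 0 (E k)) = mmult (W 0 (E (k + 1))) (W 1 (\<lambda>_. 1))"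
    unfolding mm_W_left mm_W_right by (auto simp: W_def E_def intro!: ext)
  have U: "W 1 (\<lambda>_. 1) \<in> smooth_A" by (rule W_smooth[OF ec_const])
  have "madd (mmult (W 1 (\<lambda>_. 1)) (d (W 0 (E k)))) (mmult (d (W 1 (\<lambda>_. 1))) (W 0 (E k)))
      = madd (mmult (W 0 (E (k + 1))) (d (W 1 (\<lambda>_. 1)))) (mmult (d (W 0 (E (k + 1)))) (W 1 (\<lambda>_. 1)))"
  proof -
    have h1: "d (mmult (W 1 (\<lambda>_. 1)) (W 0 (E k))) = madd (mmult (W 1 (\<lambda>_. 1)) (d (W 0 (E k)))) (mmult (d (W 1 (\<lambda>_. 1))) (W 0 (E k)))"
      by (rule d_leib[OF D C U W_smooth[OF ec_E[of k]]])
    have h2: "d (mmult (W 0 (E (k + 1))) (W 1 (\<lambda>_. 1))) = madd (mmult (W 0 (E (k + 1))) (d (W 1 (\<lambda>_. 1)))) (mmult (d (W 0 (E (k + 1)))) (W 1 (\<lambda>_. 1)))"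
      by (rule d_leib[OF D C W_smooth[OF ec_E[of "k + 1"]] U])
    show ?thesis using h1 h2 comm by simp
  qed
  then have "madd (mmult (W 1 (\<lambda>_. 1)) (d (W 0 (E k)))) (mmult (d (W 1 (\<lambda>_. 1))) (W 0 (E k))) (k + n + 1) k
      = madd (mmult (W 0 (E (k + 1))) (d (W 1 (\<lambda>_. 1)))) (mmult (d (W 0 (E (k + 1)))) (W 1 (\<lambda>_. 1))) (k + n + 1) k"
    by simp
  then have "bet k + gam k = bet (k + 1)"
    using assms unfolding madd_def mm_W_left mm_W_right by (simp add: W_def E_def bet_def gam_def algebra_simps)
  then show ?thesis by (simp add: algebra_simps)
qed

lemma dU_W: "d (W 1 (\<lambda>_. 1)) = W (n + 1) gam"
proof (intro ext)
  fix i l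
  show "d (W 1 (\<lambda>_. 1)) i l = W (n + 1) gam i l"
  proof (cases "i = l + (n + 1)")
    case False
    then show ?thesis using homog_W[OF D C ec_const, of i l 1] by (simp add: W_def algebra_simps)
  next
    case True
    then show ?thesis by (simp add: W_def gam_def algebra_simps)
  qed
qed

lemma dWm:
  assumes P1: "\<And>k. gam k = bp (k + 1) - bp k"
  shows "d (W m (\<lambda>_. 1)) = W (m + n) (\<lambda>k. bp (k + m) - bp k)"
proof (induction m rule: int_induct[where k=0])
  case base
  show ?case using dW0[OF ec_const, of 1] by (simp add: W_def)
next
  case (step1 m)
  have split: "W (m + 1) (\<lambda>_. 1) = mmult (W m (\<lambda>_. 1)) (W 1 (\<lambda>_. 1))"
    unfolding mm_W_right by (auto simp: W_def intro!: ext)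
  have "d (W (m + 1) (\<lambda>_. 1)) = madd (mmult (W m (\<lambda>_. 1)) (d (W 1 (\<lambda>_. 1)))) (mmult (d (W m (\<lambda>_. 1))) (W 1 (\<lambda>_. 1)))"
    unfolding split by (rule d_leib[OF D C W_smooth[OF ec_const] W_smooth[OF ec_const]])
  also have "\<dots> = W (m + 1 + n) (\<lambda>k. bp (k + (m + 1)) - bp k)"
    unfolding dU_W step1(2)
  proof (intro ext)
    fix i l
    show "madd (mmult (W m (\<lambda>_. 1)) (W (n + 1) gam)) (mmult (W (m + n) (\<lambda>k. bp (k + m) - bp k)) (W 1 (\<lambda>_. 1))) i l
        = W (m + 1 + n) (\<lambda>k. bp (k + (m + 1)) - bp k) i l"
      using P1[of l] unfolding madd_def mm_W_left mm_W_right by (simp add: W_def algebra_simps)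
  qed
  finally show ?case .
next
  case (step2 m)
  have split: "W m (\<lambda>_. 1) = mmult (W (m - 1) (\<lambda>_. 1)) (W 1 (\<lambda>_. 1))"
    unfolding mm_W_right by (auto simp: W_def intro!: ext)
  have "d (W m (\<lambda>_. 1)) = madd (mmult (W (m - 1) (\<lambda>_. 1)) (d (W 1 (\<lambda>_. 1)))) (mmult (d (W (m - 1) (\<lambda>_. 1))) (W 1 (\<lambda>_. 1)))"
    by (subst split) (rule d_leib[OF D C W_smooth[OF ec_const] W_smooth[OF ec_const]])
  moreover define DW where "DW = d (W (m - 1) (\<lambda>_. 1))"
  ultimately have dm: "d (W m (\<lambda>_. 1)) = madd (mmult (W (m - 1) (\<lambda>_. 1)) (d (W 1 (\<lambda>_. 1)))) (mmult DW (W 1 (\<lambda>_. 1)))"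
    by simp
  have e: "W (m + n) (\<lambda>k. bp (k + m) - bp k) i l = W (n + 1) gam (i - (m - 1)) l + DW i (l + 1)" for i l
    using fun_cong[OF fun_cong[OF dm, of i], of l]
    unfolding step2(2) dU_W madd_def mm_W_left unfolding mm_W_right by simp
  show ?case unfolding DW_def[symmetric]
  proof (intro ext)
    fix i j
    have h: "DW i j = W (m + n) (\<lambda>k. bp (k + m) - bp k) i (j - 1) - W (n + 1) gam (i - (m - 1)) (j - 1)"
      using e[of i "j - 1"] by simp
    show "DW i j = W (m - 1 + n) (\<lambda>k. bp (k + (m - 1)) - bp k) i j"
    proof (cases "i = j + (m - 1 + n)")
      case True
      then have "DW i j = (bp (j - 1 + m) - bp (j - 1)) - gam (j - 1)" using h by (simp add: W_def)
      also have "gam (j - 1) = bp (j - 1 + 1) - bp (j - 1)" by (rule P1)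
      finally have "DW i j = bp (j - 1 + m) - bp (j - 1 + 1)" by simp
      moreover have "j - 1 + m = j + (m - 1)" "j - 1 + 1 = j" by simp_all
      ultimately have a: "DW i j = bp (j + (m - 1)) - bp j" by simp
      have "W (m - 1 + n) (\<lambda>k. bp (k + (m - 1)) - bp k) i j = bp (j + (m - 1)) - bp j"
        using True by (simp add: W_def)
      then show ?thesis using a by simp
    next
      case False
      then have "DW i j = 0" using h by (simp add: W_def)
      then show ?thesis using False by (simp add: W_def)
    qed
  qed
qed

lemma dWa:
  assumes P1: "\<And>k. gam k = bp (k + 1) - bp k"
    and P2: "\<And>a k. bet k * (a k - a (k + n)) = bp k * (a k - a (k + n))"
    and a: "eventually_const a"
  shows "d (W m a) = commutator (W n bp) (W m a)"
proof -
  have split: "W m a = mmult (W m (\<lambda>_. 1)) (W 0 a)"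
    unfolding mm_W_right by (auto simp: W_def intro!: ext)
  have "d (W m a) = madd (mmult (W m (\<lambda>_. 1)) (d (W 0 a))) (mmult (d (W m (\<lambda>_. 1))) (W 0 a))"
    by (subst split) (rule d_leib[OF D C W_smooth[OF ec_const] W_smooth[OF a]])
  also have "\<dots> = commutator (W n bp) (W m a)"
    unfolding dW0[OF a] dWm[OF P1] comm_W
  proof (intro ext)
    fix i l
    show "madd (mmult (W m (\<lambda>_. 1)) (W n (\<lambda>k. bet k * (a k - a (k + n))))) (mmult (W (m + n) (\<lambda>k. bp (k + m) - bp k)) (W 0 a)) i l =
         bp (i - n) * W m a (i - n) l - W m a i (l + n) * bp l"
      using P2[of l a] unfolding madd_def mm_W_left mm_W_right by (simp add: W_def algebra_simps)
  qed
  finally show ?thesis .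
qed

lemma dsmooth:
  assumes P1: "\<And>k. gam k = bp (k + 1) - bp k"
    and P2: "\<And>a k. bet k * (a k - a (k + n)) = bp k * (a k - a (k + n))"
    and M: "M \<in> smooth_A"
  shows "d M = commutator (W n bp) M"
proof -
  obtain N a where N: "finite N" "\<forall>m. eventually_const (a m)" "M = (\<lambda>i j. \<Sum>m\<in>N. W m (a m) i j)"
    using M unfolding smooth_W by blast
  have "d (\<lambda>i j. \<Sum>m\<in>F. W m (a m) i j) = commutator (W n bp) (\<lambda>i j. \<Sum>m\<in>F. W m (a m) i j)" if "finite F" for F
    using that
  proof (induction F rule: finite_induct)
    case empty
    show ?case using d_zero[OF D C] by (simp add: comm_W)
  next
    case (insert x F)
    have eq: "(\<lambda>i j. \<Sum>m\<in>insert x F. W m (a m) i j) = madd (W x (a x)) (\<lambda>i j. \<Sum>m\<in>F. W m (a m) i j)"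
      using insert(1,2) by (auto simp: madd_def intro!: ext)
    have "d (\<lambda>i j. \<Sum>m\<in>insert x F. W m (a m) i j) = madd (d (W x (a x))) (d (\<lambda>i j. \<Sum>m\<in>F. W m (a m) i j))"
      unfolding eq by (rule d_add[OF D C W_smooth sum_smooth]) (use N(2) insert(1) in auto)
    also have "\<dots> = madd (commutator (W n bp) (W x (a x))) (commutator (W n bp) (\<lambda>i j. \<Sum>m\<in>F. W m (a m) i j))"
      using dWa[OF P1 P2 N(2)[rule_format, of x]] insert(3) by simp
    also have "\<dots> = commutator (W n bp) (\<lambda>i j. \<Sum>m\<in>insert x F. W m (a m) i j)"
      unfolding eq comm_W by (auto simp: madd_def algebra_simps intro!: ext)
    finally show ?case .
  qed
  then show ?thesis using N by simp
qed

end



definition anti :: "(int \<Rightarrow> complex) \<Rightarrow> int \<Rightarrow> complex" where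
  "anti g k = (if 0 \<le> k then (\<Sum>j<nat k. g (int j)) else - (\<Sum>j<nat (- k). g (- int j - 1)))"

lemma anti_step: "anti g (k + 1) - anti g k = g k"
proof -
  consider "k \<ge> 0" | "k = -1" | "k < -1" by linarith
  then show ?thesis
  proof cases
    case 1
    then have "nat (k + 1) = Suc (nat k)" by simp
    then show ?thesis using 1 by (simp add: anti_def)
  next
    case 2
    then show ?thesis by (simp add: anti_def)
  next
    case 3
    then have e: "nat (- k) = Suc (nat (- (k + 1)))" by simp
    have "- int (nat (- (k + 1))) - 1 = k" using 3 by simp
    then show ?thesis using 3 unfolding anti_def e by simp
  qed
qed

theorem mainTheorem9:
  fixes n :: int and d :: "mat \<Rightarrow> mat"
  assumes "is_derivation d" and "n_covariant n d"
  shows "\<exists>\<beta>. convergent_increments \<beta>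
     \<and> (\<forall>a\<in>smooth_A. d a = commutator (mmult (Upow n) (diagop \<beta>)) a)
     \<and> (n \<noteq> 0 \<longrightarrow> (\<forall>\<beta>'. convergent_increments \<beta>'
            \<and> (\<forall>a\<in>smooth_A. d a = commutator (mmult (Upow n) (diagop \<beta>')) a) \<longrightarrow> \<beta>' = \<beta>))
     \<and> (n = 0 \<longrightarrow> (\<forall>\<beta>'. convergent_increments \<beta>'
            \<and> (\<forall>a\<in>smooth_A. d a = commutator (mmult (Upow n) (diagop \<beta>')) a)
            \<longrightarrow> (\<exists>c. \<forall>k. \<beta>' k = \<beta> k + c)))"
proof -
  note D = assms(1) and C = assms(2)
  define bp where "bp = (if n = 0 then anti (gam d n) else bet d n)"
  have P1: "gam d n k = bp (k + 1) - bp k" for k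
  proof (cases "n = 0")
    case True then show ?thesis using anti_step by (simp add: bp_def)
  next
    case False then show ?thesis using rel[OF D C False] by (simp add: bp_def)
  qed
  have P2: "bet d n k * (a k - a (k + n)) = bp k * (a k - a (k + n))" for a k
    by (cases "n = 0") (auto simp: bp_def)
  have main: "\<forall>a\<in>smooth_A. d a = commutator (mmult (Upow n) (diagop bp)) a"
    unfolding UD_W using dsmooth[OF D C P1 P2] by blast
  have U: "W 1 (\<lambda>_. 1) \<in> smooth_A" by (rule W_smooth[OF ec_const])
  have conv: "convergent_increments bp"
  proof -
    have hU: "has_limits_pm (\<lambda>k. d (W 1 (\<lambda>_. 1)) (k + (n + 1)) k)"
      by (rule Cstar_diag[OF d_cstar[OF D C U]])
    have "has_limits_pm (\<lambda>k. d (W 1 (\<lambda>_. 1)) (k + - 1 + (n + 1)) (k + - 1))"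
      by (rule hl_shift[OF hU])
    moreover have "(\<lambda>k. d (W 1 (\<lambda>_. 1)) (k + - 1 + (n + 1)) (k + - 1)) = (\<lambda>k. bp k - bp (k - 1))"
    proof (intro ext)
      fix k
      have "bp k - bp (k - 1) = gam d n (k - 1)" using P1[of "k - 1"] by simp
      also have "\<dots> = d (W 1 (\<lambda>_. 1)) (k - 1 + n + 1) (k - 1)"
        by (simp only: gam_def[OF D C])
      finally have f: "bp k - bp (k - 1) = d (W 1 (\<lambda>_. 1)) (k - 1 + n + 1) (k - 1)" .
      then show "d (W 1 (\<lambda>_. 1)) (k + - 1 + (n + 1)) (k + - 1) = bp k - bp (k - 1)" using f by simp
    qed
    ultimately show ?thesis unfolding convergent_increments_def by simp
  qed
  have uniq1: "\<beta>' = bp" if n0: "n \<noteq> 0" and h: "\<forall>a\<in>smooth_A. d a = commutator (mmult (Upow n) (diagop \<beta>')) a" for \<beta>'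
  proof (intro ext)
    fix k
    have "d (W 0 (E k)) = commutator (W n \<beta>') (W 0 (E k))" using h W_smooth[OF ec_E[of k], of 0] unfolding UD_W by blast
    then have "d (W 0 (E k)) (k + n) k = commutator (W n \<beta>') (W 0 (E k)) (k + n) k" by simp
    then have "bet d n k = \<beta>' k" using n0 unfolding comm_W by (simp add: bet_def[OF D C] W_def E_def)
    then show "\<beta>' k = bp k" using n0 by (simp add: bp_def)
  qed
  have uniq0: "\<exists>c. \<forall>k. \<beta>' k = bp k + c" if n0: "n = 0" and h: "\<forall>a\<in>smooth_A. d a = commutator (mmult (Upow n) (diagop \<beta>')) a" for \<beta>'
  proof -
    have st: "\<beta>' (k + 1) - \<beta>' k = bp (k + 1) - bp k" for k
    proof -
      have "d (W 1 (\<lambda>_. 1)) = commutator (W n \<beta>') (W 1 (\<lambda>_. 1))" using h U unfolding UD_W by blast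
      then have "d (W 1 (\<lambda>_. 1)) (k + 1) k = commutator (W n \<beta>') (W 1 (\<lambda>_. 1)) (k + 1) k" by simp
      moreover have "commutator (W n \<beta>') (W 1 (\<lambda>_. 1)) (k + 1) k = \<beta>' (k + 1) - \<beta>' k"
        using n0 unfolding comm_W by (simp add: W_def)
      moreover have "gam d n k = d (W 1 (\<lambda>_. 1)) (k + 1) k" using gam_def[OF D C, of k] n0 by simp
      ultimately have "gam d n k = \<beta>' (k + 1) - \<beta>' k" by simp
      then show ?thesis using P1[of k] by simp
    qed
    define c where "c = \<beta>' 0 - bp 0"
    have "\<beta>' k = bp k + c" for k
    proof (induction k rule: int_induct[where k=0])
      case base then show ?case by (simp add: c_def)
    next
      case (step1 i) then show ?case using st[of i] by (simp add: algebra_simps)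
    next
      case (step2 i) then show ?case using st[of "i - 1"] by (simp add: algebra_simps)
    qed
    then show ?thesis by blast
  qed
  show ?thesis
    by (rule exI[of _ bp]) (use conv main uniq1 uniq0 in blast)
qed


end
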